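(* For every fixed constant $k$, there is a polynomial-time algorithm that, given a binary-classification tree ensemble $\mathcal{E}$ all of whose trees have depth $1$ over a feature set $\mathcal{F}$, a set $F\subseteq\mathcal{F}$ with $|\mathcal{F}\setminus F|\le k$, and a gap parameter $g\ge 0$, decides whether $\mathcal{E}$ is $(g,F)$-sensitive.
   Context: Inputs live in $\mathcal{X} \subseteq \mathbb{R}^d$ indexed by a feature set $\mathcal{F}$; $x_f$ is the value of feature $f$ in input $x$. A decision tree is either a leaf $n$ with a real value $n.val$, or an internal node $n$ with a guard $X_f < \tau$ and two children $n.yes$, $n.no$; an input $x$ goes to $n.yes$ if $x_f<\tau$ and to $n.no$ otherwise, and $T(x)$ is the value of the leaf reached. A depth-1 tree (decision stump) has a single internal node (root) whose two children are leaves. A binary tree ensemble $\mathcal{E}$ is a finite set $\mathcal{T}$ of trees with raw output $\mathcal{E}^{raw}_1(x)=\sum_{T\in\mathcal{T}}T(x)$ and probability $\mathcal{E}^{prob}_1(x)=1/(1+e^{-\mathcal{E}^{raw}_1(x)})$. Given $F\subseteq\mathcal{F}$ and $g\ge 0$, $\mathcal{E}$ is $(g,F)$-sensitive if there exist inputs $x^{(1)},x^{(2)}$ with $x^{(1)}_f=x^{(2)}_f$ for all $f\in\mathcal{F}\setminus F$, $\mathcal{E}^{prob}_1(x^{(1)})\ge 0.5+g$ and $\mathcal{E}^{prob}_1(x^{(2)})\le 0.5-g$. Running time is polynomial in the size of the ensemble (number of trees and features), with $k$ treated as a constant. *)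

theory Defs
  imports Complex_Main
begin

text \<open>Features are natural numbers; the feature set is {..<d}. An input is a
function from features to reals (only features below d matter).\<close>

datatype tree = Leaf real | Node nat real tree tree

fun tree_eval :: "tree \<Rightarrow> (nat \<Rightarrow> real) \<Rightarrow> real" where
  "tree_eval (Leaf v) x = v"
| "tree_eval (Node f \<tau> t_yes t_no) x =
     (if x f < \<tau> then tree_eval t_yes x else tree_eval t_no x)"

fun depth :: "tree \<Rightarrow> nat" where
  "depth (Leaf v) = 0"
| "depth (Node f \<tau> l r) = Suc (max (depth l) (depth r))"

fun features :: "tree \<Rightarrow> nat set" where
  "features (Leaf v) = {}"
| "features (Node f \<tau> l r) = insert f (features l \<union> features r)"

type_synonym ensemble = "tree list"

definition raw :: "ensemble \<Rightarrow> (nat \<Rightarrow> real) \<Rightarrow> real" where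
  "raw E x = (\<Sum>T\<leftarrow>E. tree_eval T x)"

definition prob :: "ensemble \<Rightarrow> (nat \<Rightarrow> real) \<Rightarrow> real" where
  "prob E x = 1 / (1 + exp (- raw E x))"

definition sensitive :: "nat \<Rightarrow> ensemble \<Rightarrow> nat set \<Rightarrow> real \<Rightarrow> bool" where
  "sensitive d E F g \<longleftrightarrow>
     (\<exists>x1 x2 :: nat \<Rightarrow> real.
        (\<forall>f\<in>{..<d} - F. x1 f = x2 f) \<and>
        prob E x1 \<ge> 1/2 + g \<and> prob E x2 \<le> 1/2 - g)"

definition stump_ensemble :: "nat \<Rightarrow> ensemble \<Rightarrow> bool" where
  "stump_ensemble d E \<longleftrightarrow>
     (\<forall>T\<in>set E. depth T = 1 \<and> features T \<subseteq> {..<d})"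

text \<open>Each executed instruction costs one step.\<close>

datatype instr =
    IConst nat int
  | IAdd nat nat nat
  | ISub nat nat nat
  | ILoad nat nat
  | IStore nat nat
  | IJle nat nat nat
  | RConst nat int
  | RAdd nat nat nat
  | RSub nat nat nat
  | RMul nat nat nat
  | RDiv nat nat nat
  | RExp nat nat
  | RLoad nat nat
  | RStore nat nat
  | RJle nat nat nat
  | Halt

type_synonym program = "instr list"

record state =
  pc :: nat
  ireg :: "nat \<Rightarrow> int"
  rreg :: "nat \<Rightarrow> real"

definition halted :: "program \<Rightarrow> state \<Rightarrow> bool" where
  "halted P s \<longleftrightarrow> pc s \<ge> length P \<or> P ! pc s = Halt"

fun exec :: "instr \<Rightarrow> state \<Rightarrow> state" where
  "exec (IConst i c) s = s\<lparr>pc := Suc (pc s), ireg := (ireg s)(i := c)\<rparr>"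
| "exec (IAdd i j k) s = s\<lparr>pc := Suc (pc s), ireg := (ireg s)(i := ireg s j + ireg s k)\<rparr>"
| "exec (ISub i j k) s = s\<lparr>pc := Suc (pc s), ireg := (ireg s)(i := ireg s j - ireg s k)\<rparr>"
| "exec (ILoad i j) s = s\<lparr>pc := Suc (pc s), ireg := (ireg s)(i := ireg s (nat (ireg s j)))\<rparr>"
| "exec (IStore i j) s = s\<lparr>pc := Suc (pc s), ireg := (ireg s)(nat (ireg s j) := ireg s i)\<rparr>"
| "exec (IJle i j l) s = s\<lparr>pc := (if ireg s i \<le> ireg s j then l else Suc (pc s))\<rparr>"
| "exec (RConst i c) s = s\<lparr>pc := Suc (pc s), rreg := (rreg s)(i := of_int c)\<rparr>"
| "exec (RAdd i j k) s = s\<lparr>pc := Suc (pc s), rreg := (rreg s)(i := rreg s j + rreg s k)\<rparr>"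
| "exec (RSub i j k) s = s\<lparr>pc := Suc (pc s), rreg := (rreg s)(i := rreg s j - rreg s k)\<rparr>"
| "exec (RMul i j k) s = s\<lparr>pc := Suc (pc s), rreg := (rreg s)(i := rreg s j * rreg s k)\<rparr>"
| "exec (RDiv i j k) s = s\<lparr>pc := Suc (pc s), rreg := (rreg s)(i := rreg s j / rreg s k)\<rparr>"
| "exec (RExp i j) s = s\<lparr>pc := Suc (pc s), rreg := (rreg s)(i := exp (rreg s j))\<rparr>"
| "exec (RLoad i j) s = s\<lparr>pc := Suc (pc s), rreg := (rreg s)(i := rreg s (nat (ireg s j)))\<rparr>"
| "exec (RStore i j) s = s\<lparr>pc := Suc (pc s), rreg := (rreg s)(nat (ireg s j) := rreg s i)\<rparr>"
| "exec (RJle i j l) s = s\<lparr>pc := (if rreg s i \<le> rreg s j then l else Suc (pc s))\<rparr>"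
| "exec Halt s = s"

definition step :: "program \<Rightarrow> state \<Rightarrow> state" where
  "step P s = (if halted P s then s else exec (P ! pc s) s)"

definition run :: "program \<Rightarrow> nat \<Rightarrow> state \<Rightarrow> state" where
  "run P n s = (step P ^^ n) s"

definition decides_within :: "program \<Rightarrow> state \<Rightarrow> nat \<Rightarrow> bool \<Rightarrow> bool" where
  "decides_within P s0 t b \<longleftrightarrow>
     (\<exists>n\<le>t. halted P (run P n s0) \<and> ireg (run P n s0) 0 = (if b then 1 else 0))"

fun st_feat :: "tree \<Rightarrow> nat" where
  "st_feat (Node f \<tau> l r) = f" | "st_feat (Leaf v) = 0"
fun st_thr :: "tree \<Rightarrow> real" where
  "st_thr (Node f \<tau> l r) = \<tau>" | "st_thr (Leaf v) = 0"
fun leafval :: "tree \<Rightarrow> real" where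
  "leafval (Leaf v) = v" | "leafval (Node f \<tau> l r) = 0"
fun st_yes :: "tree \<Rightarrow> real" where
  "st_yes (Node f \<tau> l r) = leafval l" | "st_yes (Leaf v) = 0"
fun st_no :: "tree \<Rightarrow> real" where
  "st_no (Node f \<tau> l r) = leafval r" | "st_no (Leaf v) = 0"

text \<open>Integer registers: I[0] = d, I[1] = m (number of trees),
I[2+j] = feature of stump j, I[2+m+f] = [f \<in> F] for f < d.
Real registers: R[0] = g, R[1+3j], R[2+3j], R[3+3j] = threshold,
yes-leaf value, no-leaf value of stump j.\<close>
definition encode :: "nat \<Rightarrow> ensemble \<Rightarrow> nat set \<Rightarrow> real \<Rightarrow> state" where
  "encode d E F g =
   (let m = length E in
    \<lparr> pc = 0,
      ireg = (\<lambda>a. if a = 0 then int d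
                  else if a = 1 then int m
                  else if a < 2 + m then int (st_feat (E ! (a - 2)))
                  else if a < 2 + m + d then (if a - (2 + m) \<in> F then 1 else 0)
                  else 0),
      rreg = (\<lambda>a. if a = 0 then g
                  else if a < 1 + 3 * m then
                    (let j = (a - 1) div 3; r = (a - 1) mod 3 in
                     if r = 0 then st_thr (E ! j)
                     else if r = 1 then st_yes (E ! j) else st_no (E ! j))
                  else 0) \<rparr>)"

end

theory Submission
  imports Defs
begin

definition prog :: program where "prog = [
  IAdd 1 0 1,
  IAdd 1 0 1,
  IAdd 1 0 1,
  IAdd 1 0 1,
  IJle 1 0 158,
  IStore 2 1,
  IConst 2 18,
  IAdd 1 1 2,
  IConst 2 3,
  IAdd 2 1 2,
  IStore 3 2,
  IConst 3 4,
  IAdd 2 3 0,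
  IAdd 2 2 0,
  IJle 2 1 16,
  IJle 0 0 23,
  ILoad 2 3,
  IAdd 3 3 1,
  IStore 2 3,
  ISub 3 3 1,
  IConst 2 1,
  IAdd 3 3 2,
  IJle 0 0 12,
  IConst 2 18,
  ISub 2 1 2,
  ILoad 3 2,
  IConst 2 2,
  IAdd 2 1 2,
  IStore 3 2,
  IConst 2 1,
  IConst 16 0,
  IConst 3 18,
  ISub 3 1 3,
  ISub 3 3 0,
  ISub 3 3 0,
  ISub 3 3 0,
  ISub 3 3 0,
  IConst 4 2,
  IAdd 4 1 4,
  IAdd 5 4 3,
  IConst 6 19,
  IAdd 6 1 6,
  IAdd 6 6 3,
  IAdd 6 6 0,
  IAdd 6 6 0,
  IConst 7 17,
  IAdd 7 7 3,
  IAdd 7 7 3,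
  IAdd 7 7 3,
  IConst 8 1,
  IConst 9 (-1),
  IAdd 9 7 9,
  IAdd 10 3 3,
  IAdd 10 10 3,
  IJle 8 10 56,
  IJle 0 0 61,
  RLoad 1 8,
  IAdd 11 8 9,
  RStore 1 11,
  IAdd 8 8 2,
  IJle 0 0 54,
  RConst 10 1,
  RConst 11 0,
  RConst 12 2,
  RConst 2 0,
  RConst 3 0,
  IConst 8 0,
  IJle 0 8 125,
  IAdd 13 5 8,
  ILoad 14 13,
  IJle 2 14 75,
  IAdd 13 6 8,
  ILoad 11 13,
  IAdd 12 11 16,
  IJle 0 0 77,
  IConst 11 0,
  IAdd 12 3 16,
  IAdd 9 11 16,
  IJle 9 12 80,
  IJle 0 0 121,
  RConst 6 0,
  IAdd 15 9 9,
  IAdd 15 15 9,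
  IAdd 15 15 7,
  RLoad 7 15,
  IConst 10 0,
  IAdd 13 4 16,
  IAdd 15 7 16,
  IJle 3 10 111,
  ILoad 14 13,
  IJle 14 8 92,
  IJle 0 0 105,
  IJle 8 14 94,
  IJle 0 0 105,
  IJle 3 9 97,
  RLoad 8 15,
  RJle 8 7 101,
  IAdd 14 15 2,
  RLoad 9 14,
  RAdd 6 6 9,
  IJle 0 0 105,
  IAdd 14 15 2,
  IAdd 14 14 2,
  RLoad 9 14,
  RAdd 6 6 9,
  IAdd 10 10 2,
  IAdd 13 13 2,
  IAdd 15 15 2,
  IAdd 15 15 2,
  IAdd 15 15 2,
  IJle 0 0 88,
  IJle 9 11 117,
  RJle 6 4 114,
  RAdd 4 6 11,
  RJle 5 6 116,
  RAdd 5 6 11,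
  IJle 0 0 119,
  RAdd 4 6 11,
  RAdd 5 6 11,
  IAdd 9 9 2,
  IJle 0 0 78,
  RAdd 2 2 4,
  RAdd 3 3 5,
  IAdd 8 8 2,
  IJle 0 0 67,
  RSub 9 11 2,
  RExp 9 9,
  RAdd 9 10 9,
  RDiv 9 10 9,
  RDiv 13 10 12,
  RAdd 14 13 0,
  RJle 14 9 133,
  IJle 0 0 142,
  RSub 9 11 3,
  RExp 9 9,
  RAdd 9 10 9,
  RDiv 9 10 9,
  RSub 14 13 0,
  RJle 9 14 140,
  IJle 0 0 142,
  IConst 0 1,
  Halt,
  IConst 8 0,
  IJle 0 8 156,
  IAdd 13 5 8,
  ILoad 14 13,
  IJle 2 14 154,
  IAdd 13 6 8,
  ILoad 14 13,
  IJle 3 14 153,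
  IAdd 14 14 2,
  IStore 14 13,
  IJle 0 0 64,
  IStore 16 13,
  IAdd 8 8 2,
  IJle 0 0 143,
  IConst 0 0,
  Halt,
  RConst 1 0,
  RJle 0 1 162,
  IConst 0 0,
  Halt,
  IConst 0 1,
  Halt
 ]"
(* labels: BOOT=0 CP=12 CPB=16 CPE=23 SETUP=29 RCP=54 RCPB=56 RCPE=61 E0=64 FL=67 FLAGGED=75 CSTART=77 CL=78 CB=80 JL=88 JF1=92 JMATCH=94 JYES=97 JNO=101 JNEXT=105 JEND=111 NOMAX=114 NOMIN=116 CFIRST=117 CNEXT=119 CEND=121 FEND=125 T1=133 SUCC=140 ODOM=142 OL=143 ORESET=153 ONEXT=154 FAIL=156 ZCASE=158 ZY=162 *)

definition ev :: "state \<Rightarrow> nat \<Rightarrow> (state \<Rightarrow> bool) \<Rightarrow> bool" where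
  "ev s t Q \<longleftrightarrow> (\<exists>n\<le>t. Q (run prog n s))"

lemma len_prog: "length prog = 164" unfolding prog_def by code_simp
lemma fetch:
  "prog ! 0 = IAdd 1 0 1"
  "prog ! 1 = IAdd 1 0 1"
  "prog ! 2 = IAdd 1 0 1"
  "prog ! 3 = IAdd 1 0 1"
  "prog ! 4 = IJle 1 0 158"
  "prog ! 5 = IStore 2 1"
  "prog ! 6 = IConst 2 18"
  "prog ! 7 = IAdd 1 1 2"
  "prog ! 8 = IConst 2 3"
  "prog ! 9 = IAdd 2 1 2"
  "prog ! 10 = IStore 3 2"
  "prog ! 11 = IConst 3 4"
  "prog ! 12 = IAdd 2 3 0"
  "prog ! 13 = IAdd 2 2 0"
  "prog ! 14 = IJle 2 1 16"
  "prog ! 15 = IJle 0 0 23"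
  "prog ! 16 = ILoad 2 3"
  "prog ! 17 = IAdd 3 3 1"
  "prog ! 18 = IStore 2 3"
  "prog ! 19 = ISub 3 3 1"
  "prog ! 20 = IConst 2 1"
  "prog ! 21 = IAdd 3 3 2"
  "prog ! 22 = IJle 0 0 12"
  "prog ! 23 = IConst 2 18"
  "prog ! 24 = ISub 2 1 2"
  "prog ! 25 = ILoad 3 2"
  "prog ! 26 = IConst 2 2"
  "prog ! 27 = IAdd 2 1 2"
  "prog ! 28 = IStore 3 2"
  "prog ! 29 = IConst 2 1"
  "prog ! 30 = IConst 16 0"
  "prog ! 31 = IConst 3 18"
  "prog ! 32 = ISub 3 1 3"
  "prog ! 33 = ISub 3 3 0"
  "prog ! 34 = ISub 3 3 0"
  "prog ! 35 = ISub 3 3 0"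
  "prog ! 36 = ISub 3 3 0"
  "prog ! 37 = IConst 4 2"
  "prog ! 38 = IAdd 4 1 4"
  "prog ! 39 = IAdd 5 4 3"
  "prog ! 40 = IConst 6 19"
  "prog ! 41 = IAdd 6 1 6"
  "prog ! 42 = IAdd 6 6 3"
  "prog ! 43 = IAdd 6 6 0"
  "prog ! 44 = IAdd 6 6 0"
  "prog ! 45 = IConst 7 17"
  "prog ! 46 = IAdd 7 7 3"
  "prog ! 47 = IAdd 7 7 3"
  "prog ! 48 = IAdd 7 7 3"
  "prog ! 49 = IConst 8 1"
  "prog ! 50 = IConst 9 (-1)"
  "prog ! 51 = IAdd 9 7 9"
  "prog ! 52 = IAdd 10 3 3"
  "prog ! 53 = IAdd 10 10 3"
  "prog ! 54 = IJle 8 10 56"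
  "prog ! 55 = IJle 0 0 61"
  "prog ! 56 = RLoad 1 8"
  "prog ! 57 = IAdd 11 8 9"
  "prog ! 58 = RStore 1 11"
  "prog ! 59 = IAdd 8 8 2"
  "prog ! 60 = IJle 0 0 54"
  "prog ! 61 = RConst 10 1"
  "prog ! 62 = RConst 11 0"
  "prog ! 63 = RConst 12 2"
  "prog ! 64 = RConst 2 0"
  "prog ! 65 = RConst 3 0"
  "prog ! 66 = IConst 8 0"
  "prog ! 67 = IJle 0 8 125"
  "prog ! 68 = IAdd 13 5 8"
  "prog ! 69 = ILoad 14 13"
  "prog ! 70 = IJle 2 14 75"
  "prog ! 71 = IAdd 13 6 8"
  "prog ! 72 = ILoad 11 13"
  "prog ! 73 = IAdd 12 11 16"
  "prog ! 74 = IJle 0 0 77"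
  "prog ! 75 = IConst 11 0"
  "prog ! 76 = IAdd 12 3 16"
  "prog ! 77 = IAdd 9 11 16"
  "prog ! 78 = IJle 9 12 80"
  "prog ! 79 = IJle 0 0 121"
  "prog ! 80 = RConst 6 0"
  "prog ! 81 = IAdd 15 9 9"
  "prog ! 82 = IAdd 15 15 9"
  "prog ! 83 = IAdd 15 15 7"
  "prog ! 84 = RLoad 7 15"
  "prog ! 85 = IConst 10 0"
  "prog ! 86 = IAdd 13 4 16"
  "prog ! 87 = IAdd 15 7 16"
  "prog ! 88 = IJle 3 10 111"
  "prog ! 89 = ILoad 14 13"
  "prog ! 90 = IJle 14 8 92"
  "prog ! 91 = IJle 0 0 105"
  "prog ! 92 = IJle 8 14 94"
  "prog ! 93 = IJle 0 0 105"
  "prog ! 94 = IJle 3 9 97"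
  "prog ! 95 = RLoad 8 15"
  "prog ! 96 = RJle 8 7 101"
  "prog ! 97 = IAdd 14 15 2"
  "prog ! 98 = RLoad 9 14"
  "prog ! 99 = RAdd 6 6 9"
  "prog ! 100 = IJle 0 0 105"
  "prog ! 101 = IAdd 14 15 2"
  "prog ! 102 = IAdd 14 14 2"
  "prog ! 103 = RLoad 9 14"
  "prog ! 104 = RAdd 6 6 9"
  "prog ! 105 = IAdd 10 10 2"
  "prog ! 106 = IAdd 13 13 2"
  "prog ! 107 = IAdd 15 15 2"
  "prog ! 108 = IAdd 15 15 2"
  "prog ! 109 = IAdd 15 15 2"
  "prog ! 110 = IJle 0 0 88"
  "prog ! 111 = IJle 9 11 117"
  "prog ! 112 = RJle 6 4 114"
  "prog ! 113 = RAdd 4 6 11"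
  "prog ! 114 = RJle 5 6 116"
  "prog ! 115 = RAdd 5 6 11"
  "prog ! 116 = IJle 0 0 119"
  "prog ! 117 = RAdd 4 6 11"
  "prog ! 118 = RAdd 5 6 11"
  "prog ! 119 = IAdd 9 9 2"
  "prog ! 120 = IJle 0 0 78"
  "prog ! 121 = RAdd 2 2 4"
  "prog ! 122 = RAdd 3 3 5"
  "prog ! 123 = IAdd 8 8 2"
  "prog ! 124 = IJle 0 0 67"
  "prog ! 125 = RSub 9 11 2"
  "prog ! 126 = RExp 9 9"
  "prog ! 127 = RAdd 9 10 9"
  "prog ! 128 = RDiv 9 10 9"
  "prog ! 129 = RDiv 13 10 12"
  "prog ! 130 = RAdd 14 13 0"
  "prog ! 131 = RJle 14 9 133"
  "prog ! 132 = IJle 0 0 142"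
  "prog ! 133 = RSub 9 11 3"
  "prog ! 134 = RExp 9 9"
  "prog ! 135 = RAdd 9 10 9"
  "prog ! 136 = RDiv 9 10 9"
  "prog ! 137 = RSub 14 13 0"
  "prog ! 138 = RJle 9 14 140"
  "prog ! 139 = IJle 0 0 142"
  "prog ! 140 = IConst 0 1"
  "prog ! 141 = Halt"
  "prog ! 142 = IConst 8 0"
  "prog ! 143 = IJle 0 8 156"
  "prog ! 144 = IAdd 13 5 8"
  "prog ! 145 = ILoad 14 13"
  "prog ! 146 = IJle 2 14 154"
  "prog ! 147 = IAdd 13 6 8"
  "prog ! 148 = ILoad 14 13"
  "prog ! 149 = IJle 3 14 153"
  "prog ! 150 = IAdd 14 14 2"
  "prog ! 151 = IStore 14 13"
  "prog ! 152 = IJle 0 0 64"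
  "prog ! 153 = IStore 16 13"
  "prog ! 154 = IAdd 8 8 2"
  "prog ! 155 = IJle 0 0 143"
  "prog ! 156 = IConst 0 0"
  "prog ! 157 = Halt"
  "prog ! 158 = RConst 1 0"
  "prog ! 159 = RJle 0 1 162"
  "prog ! 160 = IConst 0 0"
  "prog ! 161 = Halt"
  "prog ! 162 = IConst 0 1"
  "prog ! 163 = Halt"
  unfolding prog_def by code_simp+


lemma run_Suc: "run P (Suc n) s = run P n (step P s)"
  unfolding run_def funpow_Suc_right comp_def ..

lemma run_add: "run P (a + b) s = run P b (run P a s)"
  unfolding run_def by (metis add.commute comp_apply funpow_add)

lemma ev_done: "Q s \<Longrightarrow> ev s t Q"
  unfolding ev_def by (rule exI[of _ 0]) (simp add: run_def)

lemma ev_stepI: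
  assumes "pc s = n" "prog ! n = i" "i \<noteq> Halt" "n < 164" "0 < t"
    "ev (exec i s) (t - 1) Q"
  shows "ev s t Q"
proof -
  have h: "\<not> halted prog s" using assms by (simp add: halted_def len_prog)
  from assms(6) obtain k where k: "k \<le> t - 1" "Q (run prog k (exec i s))" unfolding ev_def by blast
  have "run prog (Suc k) s = run prog k (exec i s)"
    using h assms by (simp add: run_Suc step_def)
  then show ?thesis unfolding ev_def using k assms(5) by (intro exI[of _ "Suc k"]) auto
qed

lemma ev_mono: "ev s t Q \<Longrightarrow> t \<le> t' \<Longrightarrow> (\<And>s. Q s \<Longrightarrow> Q' s) \<Longrightarrow> ev s t' Q'"
  unfolding ev_def by (meson order_trans)

lemma ev_trans: "ev s t1 (\<lambda>s'. ev s' t2 Q) \<Longrightarrow> ev s (t1 + t2) Q"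
  unfolding ev_def by (metis add_mono run_add)

lemma ev_seq: "ev s t1 R \<Longrightarrow> (\<And>s'. R s' \<Longrightarrow> ev s' t2 Q) \<Longrightarrow> t1 + t2 \<le> t \<Longrightarrow> ev s t Q"
  by (metis ev_mono ev_trans order_refl)



lemma ev_step:
  assumes "prog ! pc s = i" "i \<noteq> Halt" "pc s < 164" "0 < t"
    "ev (exec i s) (t - 1) Q"
  shows "ev s t Q"
  using ev_stepI[of s "pc s" i t Q] assms by simp

lemma ev_done': "pc s = L \<Longrightarrow> R s \<Longrightarrow> ev s t (\<lambda>s'. pc s' = L \<and> R s')"
  by (rule ev_done) simp

definition frame :: "state \<Rightarrow> state \<Rightarrow> nat set \<Rightarrow> nat set \<Rightarrow> bool" where
  "frame s s' A B \<longleftrightarrow> (\<forall>a. a \<notin> A \<longrightarrow> ireg s' a = ireg s a) \<and> (\<forall>a. a \<notin> B \<longrightarrow> rreg s' a = rreg s a)"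

lemma frame_trans: "frame s s1 A B \<Longrightarrow> frame s1 s2 A B \<Longrightarrow> frame s s2 A B"
  unfolding frame_def by auto

lemma frame_mono: "frame s s1 A B \<Longrightarrow> A \<subseteq> A' \<Longrightarrow> B \<subseteq> B' \<Longrightarrow> frame s s1 A' B'"
  unfolding frame_def by auto


lemma ev_if_pc: "(C \<Longrightarrow> ev (s\<lparr>pc := a\<rparr>) t Q) \<Longrightarrow> (\<not> C \<Longrightarrow> ev (s\<lparr>pc := b\<rparr>) t Q) \<Longrightarrow> ev (s\<lparr>pc := if C then a else b\<rparr>) t Q"
  by simp


lemma nat_simps[simp]: "nat (int a + int b) = a + b" "nat (int a + 3 * int b + 1) = Suc (a + 3 * b)" "nat (int a + 3 * int b + 1 + 1) = Suc (Suc (a + 3 * b))" "nat (int a + 1) = Suc a" "nat (1 + int a) = Suc a"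
  "nat (int a + 3 * int b) = a + 3 * b" "nat (1 + (int a + int b)) = Suc (a + b)"
  "nat (1 + (int a + 3 * int b)) = Suc (a + 3 * b)" "nat (2 + (int a + 3 * int b)) = Suc (Suc (a + 3 * b))"
  by simp_all


declare nat_add_distrib[simp] nat_mult_distrib[simp]

lemma frame_trans2: "frame s s1 A B \<Longrightarrow> frame s1 s2 A' B' \<Longrightarrow> A \<union> A' \<subseteq> A'' \<Longrightarrow> B \<union> B' \<subseteq> B'' \<Longrightarrow> frame s s2 A'' B''"
  unfolding frame_def by (metis Un_iff subsetD)

definition fe :: "ensemble \<Rightarrow> nat \<Rightarrow> nat" where "fe E j = st_feat (E!j)"
definition th :: "ensemble \<Rightarrow> nat \<Rightarrow> real" where "th E j = st_thr (E!j)"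
definition yv :: "ensemble \<Rightarrow> nat \<Rightarrow> real" where "yv E j = st_yes (E!j)"
definition nv :: "ensemble \<Rightarrow> nat \<Rightarrow> real" where "nv E j = st_no (E!j)"
definition hv :: "ensemble \<Rightarrow> nat \<Rightarrow> nat \<Rightarrow> real" where
  "hv E j c = (if c < length E then (if th E c < th E j then yv E j else nv E j) else yv E j)"
definition ctb :: "ensemble \<Rightarrow> nat \<Rightarrow> nat \<Rightarrow> nat \<Rightarrow> real" where
  "ctb E f c j = (if fe E j = f then hv E j c else 0)"
definition psum :: "ensemble \<Rightarrow> nat \<Rightarrow> nat \<Rightarrow> nat \<Rightarrow> real" where
  "psum E f c n = (\<Sum>j<n. ctb E f c j)"

definition FB :: "nat \<Rightarrow> nat \<Rightarrow> nat" where "FB d m = m + 4*d + 20"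
definition FLB :: "nat \<Rightarrow> nat \<Rightarrow> nat" where "FLB d m = 2*m + 4*d + 20"
definition YB :: "nat \<Rightarrow> nat \<Rightarrow> nat" where "YB d m = 2*m + 6*d + 37"
definition RB :: "nat \<Rightarrow> nat" where "RB m = 3*m + 17"

definition MI :: "nat \<Rightarrow> ensemble \<Rightarrow> nat set \<Rightarrow> real \<Rightarrow> state \<Rightarrow> (nat \<Rightarrow> nat) \<Rightarrow> bool" where
  "MI d E F g s Y \<longleftrightarrow>
    ireg s 0 = int d \<and> ireg s 2 = 1 \<and> ireg s 3 = int (length E) \<and>
    ireg s 4 = int (FB d (length E)) \<and> ireg s 5 = int (FLB d (length E)) \<and>
    ireg s 6 = int (YB d (length E)) \<and> ireg s 7 = int (RB (length E)) \<and> ireg s 16 = 0 \<and>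
    (\<forall>j<length E. ireg s (FB d (length E) + j) = int (fe E j)) \<and>
    (\<forall>f<d. ireg s (FLB d (length E) + f) = (if f \<in> F then 1 else 0)) \<and>
    (\<forall>f<d. ireg s (YB d (length E) + f) = int (Y f)) \<and>
    (\<forall>j<length E. rreg s (RB (length E) + 3*j) = th E j \<and> rreg s (RB (length E) + 3*j + 1) = yv E j
        \<and> rreg s (RB (length E) + 3*j + 2) = nv E j) \<and>
    rreg s 0 = g \<and> rreg s 10 = 1 \<and> rreg s 11 = 0 \<and> rreg s 12 = 2"

lemma MI_frame:
  assumes "MI d E F g s Y" "frame s s' A B" "A \<subseteq> {1,8,9,10,11,12,13,14,15}" "B \<subseteq> {1,2,3,4,5,6,7,8,9,13,14}"
  shows "MI d E F g s' Y"
proof -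
  have i: "ireg s' a = ireg s a" if "a \<notin> {1,8,9,10,11,12,13,14,15}" for a
    using assms(2,3) that unfolding frame_def by blast
  have r: "rreg s' a = rreg s a" if "a \<notin> {1,2,3,4,5,6,7,8,9,13,14}" for a
    using assms(2,4) that unfolding frame_def by blast
  show ?thesis using assms(1) unfolding MI_def
    by (simp add: i r FB_def FLB_def YB_def RB_def)
qed

lemma jbody:
  assumes "pc s = 88" "ireg s 3 = int m" "ireg s 2 = 1" "ireg s 0 = int d"
    "ireg s 8 = int f" "ireg s 9 = int c" "ireg s 10 = int j" "ireg s 13 = int (fb + j)"
    "ireg s 15 = int (rb + 3*j)" "j < m" "c \<le> m"
    "ireg s (fb + j) = int fj"
    "rreg s (rb + 3*j) = tj" "rreg s (rb + 3*j+1) = yj" "rreg s (rb + 3*j+2) = nj"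
    "rreg s 7 = tc" "rreg s 6 = v" "fb \<ge> 17" "rb \<ge> 17"
  shows "ev s 20 (\<lambda>s'. pc s' = 88 \<and> ireg s' 10 = int (Suc j) \<and> ireg s' 13 = int (fb + Suc j)
      \<and> ireg s' 15 = int (rb + 3 * Suc j) \<and>
      rreg s' 6 = v + (if fj = f then (if c < m then (if tc < tj then yj else nj) else yj) else 0)
      \<and> frame s s' {10,13,14,15} {6,8,9})"
  using assms
  apply -
  apply (rule ev_step, simp add: fetch, simp, simp, simp, simp split del: if_split, (rule ev_if_pc)?)
  apply ((rule ev_done', (simp; fail), (auto simp: frame_def add_ac)[1]) | (rule ev_step, simp add: fetch, simp, simp, simp, simp split del: if_split, (rule ev_if_pc)?))+
  done

lemma jloop:
  assumes "MI d E F g s Y" "pc s = 88" "ireg s 8 = int f" "ireg s 9 = int c" "ireg s 10 = int j"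
    "ireg s 13 = int (FB d (length E) + j)" "ireg s 15 = int (RB (length E) + 3*j)" "j \<le> length E"
    "c \<le> length E" "c < length E \<Longrightarrow> rreg s 7 = th E c"
  shows "ev s ((length E - j) * 20 + 1) (\<lambda>s'. pc s' = 111 \<and> rreg s' 6 = rreg s 6 + (\<Sum>i\<in>{j..<length E}. ctb E f c i)
     \<and> frame s s' {10,13,14,15} {6,8,9})"
  using assms
proof (induction "length E - j" arbitrary: s j)
  case 0
  then have "j = length E" by simp
  then show ?case using 0 unfolding MI_def
    apply -
    apply (rule ev_step, simp add: fetch, simp, simp, simp, simp split del: if_split)
    apply (rule ev_done, simp add: frame_def)
    done
next
  case (Suc n)
  let ?m = "length E"
  have jm: "j < ?m" using Suc by simp
  have mi: "ireg s 3 = int ?m" "ireg s 2 = 1" "ireg s 0 = int d"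
    "ireg s (FB d ?m + j) = int (fe E j)"
    "rreg s (RB ?m + 3*j) = th E j" "rreg s (RB ?m + 3*j+1) = yv E j" "rreg s (RB ?m + 3*j+2) = nv E j"
    using Suc.prems(1) jm unfolding MI_def by auto
  have fb: "FB d ?m \<ge> 17" "RB ?m \<ge> 17" by (simp_all add: FB_def RB_def)
  have b: "ev s 20 (\<lambda>s'. pc s' = 88 \<and> ireg s' 10 = int (Suc j) \<and> ireg s' 13 = int (FB d ?m + Suc j)
      \<and> ireg s' 15 = int (RB ?m + 3 * Suc j) \<and>
      rreg s' 6 = rreg s 6 + (if fe E j = f then (if c < ?m then (if rreg s 7 < th E j then yv E j else nv E j) else yv E j) else 0)
      \<and> frame s s' {10,13,14,15} {6,8,9})"
    by (rule jbody) (use Suc.prems mi fb jm in auto)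
  show ?case
  proof (rule ev_seq[OF b])
    fix s1 assume s1: "pc s1 = 88 \<and> ireg s1 10 = int (Suc j) \<and> ireg s1 13 = int (FB d ?m + Suc j)
      \<and> ireg s1 15 = int (RB ?m + 3 * Suc j) \<and>
      rreg s1 6 = rreg s 6 + (if fe E j = f then (if c < ?m then (if rreg s 7 < th E j then yv E j else nv E j) else yv E j) else 0)
      \<and> frame s s1 {10,13,14,15} {6,8,9}"
    have mi1: "MI d E F g s1 Y" using MI_frame[OF Suc.prems(1)] s1 by blast
    have fr: "frame s s1 {10,13,14,15} {6,8,9}" using s1 by blast
    have same: "ireg s1 8 = int f" "ireg s1 9 = int c" "rreg s1 7 = rreg s 7"
      using fr Suc.prems unfolding frame_def by auto
    have ih: "ev s1 ((?m - Suc j) * 20 + 1) (\<lambda>s'. pc s' = 111 \<and> rreg s' 6 = rreg s1 6 + (\<Sum>i\<in>{Suc j..<?m}. ctb E f c i)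
       \<and> frame s1 s' {10,13,14,15} {6,8,9})"
      using Suc.hyps(1)[of "Suc j" s1] Suc.hyps(2) mi1 s1 same Suc.prems jm by auto
    have ctb: "(if fe E j = f then (if c < ?m then (if rreg s 7 < th E j then yv E j else nv E j) else yv E j) else 0) = ctb E f c j"
      using Suc.prems(10) unfolding ctb_def hv_def by auto
    have sm: "(\<Sum>i\<in>{j..<?m}. ctb E f c i) = ctb E f c j + (\<Sum>i\<in>{Suc j..<?m}. ctb E f c i)"
      using jm by (simp add: sum.atLeast_Suc_lessThan)
    show "ev s1 ((?m - Suc j) * 20 + 1) (\<lambda>s'. pc s' = 111 \<and> rreg s' 6 = rreg s 6 + (\<Sum>i\<in>{j..<?m}. ctb E f c i)
     \<and> frame s s' {10,13,14,15} {6,8,9})"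
      apply (rule ev_mono[OF ih], simp)
      using s1 ctb sm frame_trans[OF fr] by auto
  next
    show "20 + ((length E - Suc j) * 20 + 1) \<le> (length E - j) * 20 + 1" using jm by (simp add: algebra_simps)
  qed
qed


lemma cpre:
  assumes "pc s = 78" "ireg s 9 = int c" "ireg s 12 = int hi" "c \<le> hi" "ireg s 4 = int fb" "ireg s 7 = int rb"
    "ireg s 16 = 0" "rreg s (rb + 3*c) = tc" "rb \<ge> 17"
  shows "ev s 9 (\<lambda>s'. pc s' = 88 \<and> ireg s' 10 = 0 \<and> ireg s' 13 = int fb \<and> ireg s' 15 = int rb \<and> rreg s' 6 = 0
     \<and> rreg s' 7 = tc \<and> frame s s' {10,13,15} {6,7})"
  using assms
  apply -
  apply (rule ev_step, simp add: fetch, simp, simp, simp, simp split del: if_split, (rule ev_if_pc)?)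
  apply ((rule ev_done', (simp; fail), (auto simp: frame_def add_ac)[1]) | (rule ev_step, simp add: fetch, simp, simp, simp, simp split del: if_split, (rule ev_if_pc)?))+
  done

lemma jend:
  assumes "pc s = 111" "ireg s 9 = int c" "ireg s 11 = int lo" "lo \<le> c" "ireg s 2 = 1" "ireg s 0 = int d"
    "rreg s 11 = 0" "rreg s 6 = v" "rreg s 4 = mx" "rreg s 5 = mn"
  shows "ev s 8 (\<lambda>s'. pc s' = 78 \<and> ireg s' 9 = int (Suc c) \<and> rreg s' 4 = (if c = lo then v else max mx v)
     \<and> rreg s' 5 = (if c = lo then v else min mn v) \<and> frame s s' {9} {4,5})"
  using assms
  apply -
  apply (rule ev_step, simp add: fetch, simp, simp, simp, simp split del: if_split, (rule ev_if_pc)?)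
  apply ((rule ev_done', (simp; fail), (auto simp: frame_def add_ac)[1]) | (rule ev_step, simp add: fetch, simp, simp, simp, simp split del: if_split, (rule ev_if_pc)?))+
  done


definition valf :: "ensemble \<Rightarrow> nat \<Rightarrow> nat \<Rightarrow> real" where
  "valf E f c = (\<Sum>i<length E. ctb E f c i)"

lemma citer:
  assumes "MI d E F g s Y" "pc s = 78" "ireg s 8 = int f" "ireg s 9 = int c" "ireg s 11 = int lo"
    "ireg s 12 = int hi" "lo \<le> c" "c \<le> hi" "hi \<le> length E"
  shows "ev s (20 * length E + 18) (\<lambda>s'. pc s' = 78 \<and> ireg s' 9 = int (Suc c)
     \<and> rreg s' 4 = (if c = lo then valf E f c else max (rreg s 4) (valf E f c))
     \<and> rreg s' 5 = (if c = lo then valf E f c else min (rreg s 5) (valf E f c))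
     \<and> frame s s' {9,10,13,14,15} {4,5,6,7,8,9})"
proof -
  let ?m = "length E"
  have mi: "ireg s 4 = int (FB d ?m)" "ireg s 7 = int (RB ?m)" "ireg s 16 = 0" "RB ?m \<ge> 17"
    "ireg s 2 = 1" "ireg s 0 = int d" "rreg s 11 = 0"
    using assms(1) unfolding MI_def by (auto simp: RB_def)
  have thc: "c < ?m \<Longrightarrow> rreg s (RB ?m + 3*c) = th E c" using assms(1) unfolding MI_def by auto
  note b1 = cpre[OF assms(2,4,6) _ mi(1,2,3) refl mi(4)]
  show ?thesis
  proof (rule ev_seq[OF b1])
    show "c \<le> hi" by fact
    fix s1 assume s1: "pc s1 = 88 \<and> ireg s1 10 = 0 \<and> ireg s1 13 = int (FB d ?m) \<and> ireg s1 15 = int (RB ?m) \<and> rreg s1 6 = 0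
     \<and> rreg s1 7 = rreg s (RB ?m + 3 * c) \<and> frame s s1 {10,13,15} {6,7}"
    have mi1: "MI d E F g s1 Y" using MI_frame[OF assms(1)] s1 by blast
    have fr1: "frame s s1 {10,13,15} {6,7}" using s1 by blast
    have same1: "ireg s1 8 = int f" "ireg s1 9 = int c" "ireg s1 11 = int lo" "rreg s1 4 = rreg s 4" "rreg s1 5 = rreg s 5"
      using fr1 assms unfolding frame_def by auto
    have b2: "ev s1 ((?m - 0) * 20 + 1) (\<lambda>s'. pc s' = 111 \<and> rreg s' 6 = rreg s1 6 + (\<Sum>i\<in>{0..<?m}. ctb E f c i)
     \<and> frame s1 s' {10,13,14,15} {6,8,9})"
      by (rule jloop[OF mi1]) (use s1 same1 thc assms in auto)
    show "ev s1 (20 * length E + 18 - 9) (\<lambda>s'. pc s' = 78 \<and> ireg s' 9 = int (Suc c)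
     \<and> rreg s' 4 = (if c = lo then valf E f c else max (rreg s 4) (valf E f c))
     \<and> rreg s' 5 = (if c = lo then valf E f c else min (rreg s 5) (valf E f c))
     \<and> frame s s' {9,10,13,14,15} {4,5,6,7,8,9})"
    proof (rule ev_seq[OF b2])
      fix s2 assume s2: "pc s2 = 111 \<and> rreg s2 6 = rreg s1 6 + (\<Sum>i\<in>{0..<?m}. ctb E f c i)
         \<and> frame s1 s2 {10,13,14,15} {6,8,9}"
      have fr2: "frame s1 s2 {10,13,14,15} {6,8,9}" using s2 by blast
      have v: "rreg s2 6 = valf E f c" using s2 s1 by (simp add: valf_def atLeast0LessThan)
      have same2: "ireg s2 9 = int c" "ireg s2 11 = int lo" "ireg s2 2 = 1" "ireg s2 0 = int d" "rreg s2 11 = 0"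
        "rreg s2 4 = rreg s 4" "rreg s2 5 = rreg s 5"
        using fr2 fr1 same1 mi assms unfolding frame_def by auto
      note b3 = jend[OF _ same2(1,2) assms(7) same2(3,4,5) v same2(6,7)]
      show "ev s2 (20 * length E + 18 - 9 - ((?m - 0) * 20 + 1)) (\<lambda>s'. pc s' = 78 \<and> ireg s' 9 = int (Suc c)
       \<and> rreg s' 4 = (if c = lo then valf E f c else max (rreg s 4) (valf E f c))
       \<and> rreg s' 5 = (if c = lo then valf E f c else min (rreg s 5) (valf E f c))
       \<and> frame s s' {9,10,13,14,15} {4,5,6,7,8,9})"
        apply (rule ev_mono[OF b3])
        using s2 apply simp
         apply simp
        apply (elim conjE, intro conjI, assumption+)
        apply (rule frame_trans2[OF frame_trans2[OF fr1 fr2 order_refl order_refl]], assumption)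
        apply auto
        done
    qed simp
  qed simp
qed


lemma cexit:
  assumes "pc s = 78" "ireg s 9 = int c" "ireg s 12 = int hi" "hi < c"
  shows "ev s 2 (\<lambda>s'. pc s' = 121 \<and> frame s s' {} {})"
  using assms
  apply -
  apply (rule ev_step, simp add: fetch, simp, simp, simp, simp split del: if_split, (rule ev_if_pc)?)
  apply ((rule ev_done', (simp; fail), (auto simp: frame_def add_ac)[1]) | (rule ev_step, simp add: fetch, simp, simp, simp, simp split del: if_split, (rule ev_if_pc)?))+
  done

lemma Max_step:
  assumes "lo \<le> c"
  shows "Max (h ` {lo..<Suc c}) = (if c = lo then h c else max (Max (h ` {lo..<c})) (h c))"
    "Min (h ` {lo..<Suc c}) = (if c = lo then h c else min (Min (h ` {lo..<c})) (h c))"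
proof -
  have e: "{lo..<Suc c} = insert c {lo..<c}" using assms by auto
  show "Max (h ` {lo..<Suc c}) = (if c = lo then h c else max (Max (h ` {lo..<c})) (h c))"
    using assms unfolding e by (auto simp: max.commute)
  show "Min (h ` {lo..<Suc c}) = (if c = lo then h c else min (Min (h ` {lo..<c})) (h c))"
    using assms unfolding e by (auto simp: min.commute)
qed

lemma cloop:
  assumes "MI d E F g s Y" "pc s = 78" "ireg s 8 = int f" "ireg s 9 = int c" "ireg s 11 = int lo"
    "ireg s 12 = int hi" "lo \<le> c" "c \<le> Suc hi" "hi \<le> length E" "lo \<le> hi"
    "lo < c \<Longrightarrow> rreg s 4 = Max (valf E f ` {lo..<c}) \<and> rreg s 5 = Min (valf E f ` {lo..<c})"
  shows "ev s ((Suc hi - c) * (20 * length E + 18) + 2) (\<lambda>s'. pc s' = 121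
     \<and> rreg s' 4 = Max (valf E f ` {lo..hi}) \<and> rreg s' 5 = Min (valf E f ` {lo..hi})
     \<and> frame s s' {9,10,13,14,15} {4,5,6,7,8,9})"
  using assms
proof (induction "Suc hi - c" arbitrary: s c)
  case 0
  then have c: "c = Suc hi" by simp
  have e: "{lo..hi} = {lo..<c}" using c by auto
  show ?case
    apply (rule ev_mono[OF cexit[OF 0(3,5,7)]])
    using c 0 e by (auto simp: frame_def less_Suc_eq_le)
next
  case (Suc n)
  have ch: "c \<le> hi" using Suc by simp
  note b = citer[OF Suc.prems(1-6) Suc.prems(7) ch Suc.prems(9)]
  show ?case
  proof (rule ev_seq[OF b])
    fix s1 assume s1: "pc s1 = 78 \<and> ireg s1 9 = int (Suc c)
     \<and> rreg s1 4 = (if c = lo then valf E f c else max (rreg s 4) (valf E f c))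
     \<and> rreg s1 5 = (if c = lo then valf E f c else min (rreg s 5) (valf E f c))
     \<and> frame s s1 {9,10,13,14,15} {4,5,6,7,8,9}"
    have fr: "frame s s1 {9,10,13,14,15} {4,5,6,7,8,9}" using s1 by blast
    have mi1: "MI d E F g s1 Y" using MI_frame[OF Suc.prems(1) fr] by auto
    have same: "ireg s1 8 = int f" "ireg s1 11 = int lo" "ireg s1 12 = int hi"
      using fr Suc.prems unfolding frame_def by auto
    have inv: "rreg s1 4 = Max (valf E f ` {lo..<Suc c}) \<and> rreg s1 5 = Min (valf E f ` {lo..<Suc c})"
      unfolding Max_step[OF Suc.prems(7)] using s1 Suc.prems(7,11) by (cases "c = lo") auto
    have ih: "ev s1 ((Suc hi - Suc c) * (20 * length E + 18) + 2) (\<lambda>s'. pc s' = 121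
     \<and> rreg s' 4 = Max (valf E f ` {lo..hi}) \<and> rreg s' 5 = Min (valf E f ` {lo..hi})
     \<and> frame s1 s' {9,10,13,14,15} {4,5,6,7,8,9})"
      using Suc.hyps(1)[of "Suc c" s1] Suc.hyps(2) mi1 s1 same inv Suc.prems ch by auto
    show "ev s1 ((Suc hi - c) * (20 * length E + 18) + 2 - (20 * length E + 18)) (\<lambda>s'. pc s' = 121
     \<and> rreg s' 4 = Max (valf E f ` {lo..hi}) \<and> rreg s' 5 = Min (valf E f ` {lo..hi})
     \<and> frame s s' {9,10,13,14,15} {4,5,6,7,8,9})"
      apply (rule ev_mono[OF ih])
      using ch apply (simp add: Suc_diff_le)
      using frame_trans[OF fr] by blast
  qed (use ch in \<open>simp add: Suc_diff_le\<close>)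
qed

definition loY :: "nat set \<Rightarrow> (nat \<Rightarrow> nat) \<Rightarrow> nat \<Rightarrow> nat" where
  "loY F Y f = (if f \<in> F then 0 else Y f)"
definition hiY :: "nat \<Rightarrow> nat set \<Rightarrow> (nat \<Rightarrow> nat) \<Rightarrow> nat \<Rightarrow> nat" where
  "hiY m F Y f = (if f \<in> F then m else Y f)"
definition MXf :: "ensemble \<Rightarrow> nat set \<Rightarrow> (nat \<Rightarrow> nat) \<Rightarrow> nat \<Rightarrow> real" where
  "MXf E F Y f = Max (valf E f ` {loY F Y f..hiY (length E) F Y f})"
definition MNf :: "ensemble \<Rightarrow> nat set \<Rightarrow> (nat \<Rightarrow> nat) \<Rightarrow> nat \<Rightarrow> real" where
  "MNf E F Y f = Min (valf E f ` {loY F Y f..hiY (length E) F Y f})"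

lemma fpre:
  assumes "pc s = 67" "ireg s 0 = int d" "ireg s 8 = int f" "f < d" "ireg s 5 = int flb"
    "ireg s (flb + f) = (if fin then 1 else 0)" "ireg s 2 = 1" "ireg s 6 = int yb" "ireg s (yb + f) = int y"
    "ireg s 3 = int m" "ireg s 16 = 0" "flb \<ge> 17" "yb \<ge> 17"
  shows "ev s 9 (\<lambda>s'. pc s' = 78 \<and> ireg s' 9 = int (if fin then 0 else y) \<and> ireg s' 11 = int (if fin then 0 else y)
     \<and> ireg s' 12 = int (if fin then m else y) \<and> frame s s' {9,11,12,13,14} {})"
  using assms
  apply -
  apply (rule ev_step, simp add: fetch, simp, simp, simp, simp split del: if_split, (rule ev_if_pc)?)
  apply ((rule ev_done', (simp; fail), (auto simp: frame_def add_ac)[1]) | (rule ev_step, simp add: fetch, simp, simp, simp, simp split del: if_split, (rule ev_if_pc)?))+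
  done

lemma cend:
  assumes "pc s = 121" "ireg s 8 = int f" "ireg s 2 = 1" "ireg s 0 = int d"
  shows "ev s 4 (\<lambda>s'. pc s' = 67 \<and> ireg s' 8 = int (Suc f) \<and> rreg s' 2 = rreg s 2 + rreg s 4
     \<and> rreg s' 3 = rreg s 3 + rreg s 5 \<and> frame s s' {8} {2,3})"
  using assms
  apply -
  apply (rule ev_step, simp add: fetch, simp, simp, simp, simp split del: if_split, (rule ev_if_pc)?)
  apply ((rule ev_done', (simp; fail), (auto simp: frame_def add_ac)[1]) | (rule ev_step, simp add: fetch, simp, simp, simp, simp split del: if_split, (rule ev_if_pc)?))+
  done

lemma fexit:
  assumes "pc s = 67" "ireg s 8 = int f" "ireg s 0 = int d" "d \<le> f"
  shows "ev s 1 (\<lambda>s'. pc s' = 125 \<and> frame s s' {} {})"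
  using assms
  apply -
  apply (rule ev_step, simp add: fetch, simp, simp, simp, simp split del: if_split, (rule ev_if_pc)?)
  apply ((rule ev_done', (simp; fail), (auto simp: frame_def add_ac)[1]) | (rule ev_step, simp add: fetch, simp, simp, simp, simp split del: if_split, (rule ev_if_pc)?))+
  done


definition Kc :: "nat \<Rightarrow> nat" where "Kc m = 20 * m + 18"
definition Bf :: "nat \<Rightarrow> nat" where "Bf m = Suc m * Kc m + 15"

lemma fiter:
  assumes "MI d E F g s Y" "pc s = 67" "ireg s 8 = int f" "f < d" "f \<notin> F \<Longrightarrow> Y f \<le> length E"
  shows "ev s (Bf (length E)) (\<lambda>s'. pc s' = 67 \<and> ireg s' 8 = int (Suc f)
     \<and> rreg s' 2 = rreg s 2 + MXf E F Y f \<and> rreg s' 3 = rreg s 3 + MNf E F Y f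
     \<and> frame s s' {8,9,10,11,12,13,14,15} {2,3,4,5,6,7,8,9})"
proof -
  let ?m = "length E"
  let ?lo = "loY F Y f" and ?hi = "hiY ?m F Y f"
  have mi: "ireg s 0 = int d" "ireg s 5 = int (FLB d ?m)" "ireg s (FLB d ?m + f) = (if f \<in> F then 1 else 0)"
    "ireg s 2 = 1" "ireg s 6 = int (YB d ?m)" "ireg s (YB d ?m + f) = int (Y f)" "ireg s 3 = int ?m"
    "ireg s 16 = 0" "FLB d ?m \<ge> 17" "YB d ?m \<ge> 17"
    using assms(1,4) unfolding MI_def by (auto simp: FLB_def YB_def)
  note b1 = fpre[OF assms(2) mi(1) assms(3,4) mi(2-8) mi(9,10)]
  have lohi: "?lo \<le> ?hi" "?hi \<le> ?m" using assms(5) by (auto simp: loY_def hiY_def)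
  show ?thesis
  proof (rule ev_seq[OF b1])
    fix s1 assume s1: "pc s1 = 78 \<and> ireg s1 9 = int (if f \<in> F then 0 else Y f) \<and> ireg s1 11 = int (if f \<in> F then 0 else Y f)
     \<and> ireg s1 12 = int (if f \<in> F then ?m else Y f) \<and> frame s s1 {9,11,12,13,14} {}"
    have fr1: "frame s s1 {9,11,12,13,14} {}" using s1 by blast
    have mi1: "MI d E F g s1 Y" using MI_frame[OF assms(1) fr1] by auto
    have r1: "ireg s1 9 = int ?lo" "ireg s1 11 = int ?lo" "ireg s1 12 = int ?hi" "ireg s1 8 = int f"
      using s1 fr1 assms(3) unfolding loY_def hiY_def frame_def by auto
    note b2 = cloop[OF mi1 _ r1(4,1,2,3) order_refl _ lohi(2) lohi(1)]
    show "ev s1 (Bf ?m - 9) (\<lambda>s'. pc s' = 67 \<and> ireg s' 8 = int (Suc f)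
     \<and> rreg s' 2 = rreg s 2 + MXf E F Y f \<and> rreg s' 3 = rreg s 3 + MNf E F Y f
     \<and> frame s s' {8,9,10,11,12,13,14,15} {2,3,4,5,6,7,8,9})"
    proof (rule ev_seq[OF b2])
      show "pc s1 = 78" using s1 by blast
      show "?lo \<le> Suc ?hi" using lohi by simp
      show "?lo < ?lo \<Longrightarrow> P" for P by simp
      fix s2 assume s2: "pc s2 = 121
        \<and> rreg s2 4 = Max (valf E f ` {?lo..?hi}) \<and> rreg s2 5 = Min (valf E f ` {?lo..?hi})
        \<and> frame s1 s2 {9,10,13,14,15} {4,5,6,7,8,9}"
      have fr2: "frame s1 s2 {9,10,13,14,15} {4,5,6,7,8,9}" using s2 by blast
      have r2: "ireg s2 8 = int f" "ireg s2 2 = 1" "ireg s2 0 = int d" "rreg s2 2 = rreg s 2" "rreg s2 3 = rreg s 3"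
        using fr1 fr2 mi assms(3) unfolding frame_def by auto
      note b3 = cend[OF _ r2(1-3)]
      show "ev s2 (Bf ?m - 9 - ((Suc ?hi - ?lo) * (20 * ?m + 18) + 2)) (\<lambda>s'. pc s' = 67 \<and> ireg s' 8 = int (Suc f)
       \<and> rreg s' 2 = rreg s 2 + MXf E F Y f \<and> rreg s' 3 = rreg s 3 + MNf E F Y f
       \<and> frame s s' {8,9,10,11,12,13,14,15} {2,3,4,5,6,7,8,9})"
      proof (rule ev_mono[OF b3])
        show "pc s2 = 121" using s2 by blast
        have "(Suc ?hi - ?lo) * (20 * ?m + 18) \<le> Suc ?m * Kc ?m"
          unfolding Kc_def by (rule mult_le_mono1) (use lohi in simp)
        then show "4 \<le> Bf ?m - 9 - ((Suc ?hi - ?lo) * (20 * ?m + 18) + 2)" unfolding Bf_def by simp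
        fix s3 assume s3: "pc s3 = 67 \<and> ireg s3 8 = int (Suc f) \<and> rreg s3 2 = rreg s2 2 + rreg s2 4
          \<and> rreg s3 3 = rreg s2 3 + rreg s2 5 \<and> frame s2 s3 {8} {2,3}"
        show "pc s3 = 67 \<and> ireg s3 8 = int (Suc f)
         \<and> rreg s3 2 = rreg s 2 + MXf E F Y f \<and> rreg s3 3 = rreg s 3 + MNf E F Y f
         \<and> frame s s3 {8,9,10,11,12,13,14,15} {2,3,4,5,6,7,8,9}"
          using s3 s2 r2 frame_trans2[OF frame_trans2[OF fr1 fr2 order_refl order_refl], of s3 "{8}" "{2,3}"]
          unfolding MXf_def MNf_def by auto
      qed
    next
      have "(Suc ?hi - ?lo) * (20 * ?m + 18) \<le> Suc ?m * Kc ?m"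
        unfolding Kc_def by (rule mult_le_mono1) (use lohi in simp)
      then show "(Suc ?hi - ?lo) * (20 * ?m + 18) + 2 + (Bf ?m - 9 - ((Suc ?hi - ?lo) * (20 * ?m + 18) + 2)) \<le> Bf ?m - 9"
        unfolding Bf_def by simp
    qed
  qed (simp add: Bf_def)
qed


definition R1 :: "nat \<Rightarrow> ensemble \<Rightarrow> nat set \<Rightarrow> (nat \<Rightarrow> nat) \<Rightarrow> real" where
  "R1 d E F Y = (\<Sum>f<d. MXf E F Y f)"
definition R2 :: "nat \<Rightarrow> ensemble \<Rightarrow> nat set \<Rightarrow> (nat \<Rightarrow> nat) \<Rightarrow> real" where
  "R2 d E F Y = (\<Sum>f<d. MNf E F Y f)"

lemma floop:
  assumes "MI d E F g s Y" "pc s = 67" "ireg s 8 = int f" "f \<le> d" "\<forall>f'<d. f' \<notin> F \<longrightarrow> Y f' \<le> length E"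
    "rreg s 2 = (\<Sum>f'<f. MXf E F Y f')" "rreg s 3 = (\<Sum>f'<f. MNf E F Y f')"
  shows "ev s ((d - f) * Bf (length E) + 1) (\<lambda>s'. pc s' = 125 \<and> rreg s' 2 = R1 d E F Y \<and> rreg s' 3 = R2 d E F Y
     \<and> frame s s' {8,9,10,11,12,13,14,15} {2,3,4,5,6,7,8,9})"
  using assms
proof (induction "d - f" arbitrary: s f)
  case 0
  then have fd: "f = d" by simp
  have d: "ireg s 0 = int d" using 0 unfolding MI_def by auto
  show ?case
    apply (rule ev_mono[OF fexit[OF 0(3,4) d]])
    using fd apply simp
    using 0 fd by (auto simp: R1_def R2_def frame_def)
next
  case (Suc n)
  have fd: "f < d" using Suc by simp
  note b = fiter[OF Suc.prems(1-3) fd]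
  show ?case
  proof (rule ev_seq[OF b])
    show "f \<notin> F \<Longrightarrow> Y f \<le> length E" using Suc.prems(5) fd by blast
    fix s1 assume s1: "pc s1 = 67 \<and> ireg s1 8 = int (Suc f)
     \<and> rreg s1 2 = rreg s 2 + MXf E F Y f \<and> rreg s1 3 = rreg s 3 + MNf E F Y f
     \<and> frame s s1 {8,9,10,11,12,13,14,15} {2,3,4,5,6,7,8,9}"
    have fr: "frame s s1 {8,9,10,11,12,13,14,15} {2,3,4,5,6,7,8,9}" using s1 by blast
    have mi1: "MI d E F g s1 Y" using MI_frame[OF Suc.prems(1) fr] by auto
    have ih: "ev s1 ((d - Suc f) * Bf (length E) + 1) (\<lambda>s'. pc s' = 125 \<and> rreg s' 2 = R1 d E F Y \<and> rreg s' 3 = R2 d E F Y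
     \<and> frame s1 s' {8,9,10,11,12,13,14,15} {2,3,4,5,6,7,8,9})"
      using Suc.hyps(1)[of "Suc f" s1] Suc.hyps(2) mi1 s1 Suc.prems fd by auto
    have e: "d - f = Suc (d - Suc f)" using fd by simp
    show "ev s1 ((d - f) * Bf (length E) + 1 - Bf (length E)) (\<lambda>s'. pc s' = 125 \<and> rreg s' 2 = R1 d E F Y \<and> rreg s' 3 = R2 d E F Y
     \<and> frame s s' {8,9,10,11,12,13,14,15} {2,3,4,5,6,7,8,9})"
      apply (rule ev_mono[OF ih])
      apply (simp add: e)
      using frame_trans[OF fr] by blast
  qed (use fd in \<open>simp add: Suc_diff_Suc[symmetric]\<close>)
qed


lemma e0blk:
  assumes "pc s = 64"
  shows "ev s 3 (\<lambda>s'. pc s' = 67 \<and> rreg s' 2 = 0 \<and> rreg s' 3 = 0 \<and> ireg s' 8 = 0 \<and> frame s s' {8} {2,3})"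
  using assms
  apply -
  apply (rule ev_step, simp add: fetch, simp, simp, simp, simp split del: if_split, (rule ev_if_pc)?)
  apply ((rule ev_done', (simp; fail), (auto simp: frame_def add_ac)[1]) | (rule ev_step, simp add: fetch, simp, simp, simp, simp split del: if_split, (rule ev_if_pc)?))+
  done

definition goodc :: "real \<Rightarrow> real \<Rightarrow> real \<Rightarrow> bool" where
  "goodc g r1 r2 \<longleftrightarrow> 1/2 + g \<le> 1 / (1 + exp (- r1)) \<and> 1 / (1 + exp (- r2)) \<le> 1/2 - g"

lemma testblk:
  assumes "pc s = 125" "rreg s 2 = r1" "rreg s 3 = r2" "rreg s 0 = g" "rreg s 10 = 1" "rreg s 11 = 0"
    "rreg s 12 = 2" "ireg s 0 = int d"
  shows "ev s 16 (\<lambda>s'. pc s' = (if goodc g r1 r2 then 141 else 142) \<and> (goodc g r1 r2 \<longrightarrow> ireg s' 0 = 1)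
     \<and> (\<not> goodc g r1 r2 \<longrightarrow> frame s s' {} {9,13,14}))"
  using assms unfolding goodc_def
  apply -
  apply (rule ev_step, simp add: fetch, simp, simp, simp, simp split del: if_split, (rule ev_if_pc)?)
  apply ((rule ev_done', (simp; fail), (auto simp: frame_def add_ac)[1]) | (rule ev_step, simp add: fetch, simp, simp, simp, simp split del: if_split, (rule ev_if_pc)?))+
  done

lemma oexit:
  assumes "pc s = 143" "ireg s 8 = int f" "ireg s 0 = int d" "d \<le> f"
  shows "ev s 2 (\<lambda>s'. pc s' = 157 \<and> ireg s' 0 = 0)"
  using assms
  apply -
  apply (rule ev_step, simp add: fetch, simp, simp, simp, simp split del: if_split, (rule ev_if_pc)?)
  apply ((rule ev_done', (simp; fail), (auto simp: frame_def add_ac)[1]) | (rule ev_step, simp add: fetch, simp, simp, simp, simp split del: if_split, (rule ev_if_pc)?))+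
  done

lemma oflag:
  assumes "pc s = 143" "ireg s 8 = int f" "ireg s 0 = int d" "f < d" "ireg s 5 = int flb"
    "ireg s (flb + f) = 1" "ireg s 2 = 1" "flb \<ge> 17"
  shows "ev s 6 (\<lambda>s'. pc s' = 143 \<and> ireg s' 8 = int (Suc f) \<and> frame s s' {8,13,14} {})"
  using assms
  apply -
  apply (rule ev_step, simp add: fetch, simp, simp, simp, simp split del: if_split, (rule ev_if_pc)?)
  apply ((rule ev_done', (simp; fail), (auto simp: frame_def add_ac)[1]) | (rule ev_step, simp add: fetch, simp, simp, simp, simp split del: if_split, (rule ev_if_pc)?))+
  done

lemma oreset:
  assumes "pc s = 143" "ireg s 8 = int f" "ireg s 0 = int d" "f < d" "ireg s 5 = int flb"
    "ireg s (flb + f) = 0" "ireg s 2 = 1" "flb \<ge> 17" "ireg s 6 = int yb" "yb \<ge> 17"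
    "ireg s (yb + f) = int y" "ireg s 3 = int m" "m \<le> y" "ireg s 16 = 0"
  shows "ev s 10 (\<lambda>s'. pc s' = 143 \<and> ireg s' 8 = int (Suc f) \<and> ireg s' (yb + f) = 0
     \<and> frame s s' {yb + f, 8,13,14} {})"
  using assms
  apply -
  apply (rule ev_step, simp add: fetch, simp, simp, simp, simp split del: if_split, (rule ev_if_pc)?)
  apply ((rule ev_done', (simp; fail), (auto simp: frame_def add_ac)[1]) | (rule ev_step, simp add: fetch, simp, simp, simp, simp split del: if_split, (rule ev_if_pc)?))+
  done

lemma oinc:
  assumes "pc s = 143" "ireg s 8 = int f" "ireg s 0 = int d" "f < d" "ireg s 5 = int flb"
    "ireg s (flb + f) = 0" "ireg s 2 = 1" "flb \<ge> 17" "ireg s 6 = int yb" "yb \<ge> 17"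
    "ireg s (yb + f) = int y" "ireg s 3 = int m" "y < m"
  shows "ev s 10 (\<lambda>s'. pc s' = 64 \<and> ireg s' (yb + f) = int (Suc y)
     \<and> frame s s' {yb + f, 13,14} {})"
  using assms
  apply -
  apply (rule ev_step, simp add: fetch, simp, simp, simp, simp split del: if_split, (rule ev_if_pc)?)
  apply ((rule ev_done', (simp; fail), (auto simp: frame_def add_ac)[1]) | (rule ev_step, simp add: fetch, simp, simp, simp, simp split del: if_split, (rule ev_if_pc)?))+
  done


lemma odom0:
  assumes "pc s = 142"
  shows "ev s 1 (\<lambda>s'. pc s' = 143 \<and> ireg s' 8 = 0 \<and> frame s s' {8} {})"
  using assms
  apply -
  apply (rule ev_step, simp add: fetch, simp, simp, simp, simp split del: if_split, (rule ev_if_pc)?)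
  apply ((rule ev_done', (simp; fail), (auto simp: frame_def add_ac)[1]) | (rule ev_step, simp add: fetch, simp, simp, simp, simp split del: if_split, (rule ev_if_pc)?))+
  done


definition validY :: "nat \<Rightarrow> nat \<Rightarrow> nat set \<Rightarrow> (nat \<Rightarrow> nat) \<Rightarrow> bool" where
  "validY d m F Y \<longleftrightarrow> (\<forall>f. (f < d \<and> f \<notin> F \<longrightarrow> Y f \<le> m) \<and> (\<not> (f < d \<and> f \<notin> F) \<longrightarrow> Y f = 0))"

definition Wt :: "nat \<Rightarrow> nat set \<Rightarrow> nat \<Rightarrow> nat" where
  "Wt m F f = (\<Prod>f'<f. if f' \<in> F then 1 else Suc m)"

definition Sn :: "nat \<Rightarrow> nat set \<Rightarrow> (nat \<Rightarrow> nat) \<Rightarrow> nat \<Rightarrow> nat" where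
  "Sn m F Y n = (\<Sum>f'<n. Y f' * Wt m F f')"

definition numY :: "nat \<Rightarrow> nat \<Rightarrow> nat set \<Rightarrow> (nat \<Rightarrow> nat) \<Rightarrow> nat" where
  "numY d m F Y = Sn m F Y d"

definition rst :: "nat \<Rightarrow> (nat \<Rightarrow> nat) \<Rightarrow> nat \<Rightarrow> nat" where
  "rst f Y = (\<lambda>f'. if f' < f then 0 else Y f')"

lemma Wt_Suc: "Wt m F (Suc f) = Wt m F f * (if f \<in> F then 1 else Suc m)"
  unfolding Wt_def by simp

lemma Wt_pos: "Wt m F f > 0"
  unfolding Wt_def by (rule prod_pos) auto

lemma Sn_Suc: "Sn m F Y (Suc n) = Sn m F Y n + Y n * Wt m F n"
  unfolding Sn_def by simp

lemma M1:
  assumes "validY d m F Y" "f0 \<le> d" "\<forall>f'<f0. f' \<notin> F \<longrightarrow> Y f' = m"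
  shows "Suc (Sn m F Y f0) = Wt m F f0"
  using assms
proof (induction f0)
  case 0 then show ?case by (simp add: Sn_def Wt_def)
next
  case (Suc n)
  have ih: "Suc (Sn m F Y n) = Wt m F n" using Suc by auto
  show ?case
  proof (cases "n \<in> F")
    case True
    then have "Y n = 0" using Suc.prems(1) unfolding validY_def by blast
    then show ?thesis using ih True by (simp add: Sn_Suc Wt_Suc)
  next
    case False
    then have "Y n = m" using Suc.prems(3) by auto
    then show ?thesis using ih False by (simp add: Sn_Suc Wt_Suc algebra_simps)
  qed
qed

lemma M4:
  assumes "validY d m F Y" "n \<le> d"
  shows "Sn m F Y n < Wt m F n"
  using assms
proof (induction n)
  case 0 then show ?case by (simp add: Sn_def Wt_def)
next
  case (Suc n)
  have ih: "Sn m F Y n < Wt m F n" using Suc by auto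
  show ?case
  proof (cases "n \<in> F")
    case True
    then have "Y n = 0" using Suc.prems(1) unfolding validY_def by blast
    then show ?thesis using ih True by (simp add: Sn_Suc Wt_Suc)
  next
    case False
    then have ym: "Y n \<le> m" using Suc.prems unfolding validY_def by auto
    have "Sn m F Y n + Y n * Wt m F n < Wt m F n + m * Wt m F n"
      using ih ym by (simp add: add_less_le_mono)
    then show ?thesis using False by (simp add: Sn_Suc Wt_Suc algebra_simps)
  qed
qed

lemma numY_lt: "validY d m F Y \<Longrightarrow> numY d m F Y < Wt m F d"
  unfolding numY_def using M4 by blast

lemma M2:
  assumes "validY d m F Y" "f0 < d" "f0 \<notin> F" "Y f0 < m" "\<forall>f'<f0. f' \<notin> F \<longrightarrow> Y f' = m"
  shows "validY d m F ((rst f0 Y)(f0 := Suc (Y f0)))"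
    "numY d m F ((rst f0 Y)(f0 := Suc (Y f0))) = Suc (numY d m F Y)"
proof -
  let ?Y' = "(rst f0 Y)(f0 := Suc (Y f0))"
  show "validY d m F ?Y'"
    using assms(1-4) unfolding validY_def rst_def by auto
  have base: "Sn m F ?Y' (Suc f0) = Suc (Sn m F Y (Suc f0))"
  proof -
    have z: "Sn m F ?Y' f0 = 0" unfolding Sn_def rst_def by simp
    have "Suc (Sn m F Y f0) = Wt m F f0" by (rule M1[OF assms(1)]) (use assms in auto)
    then show ?thesis using z by (simp add: Sn_Suc)
  qed
  have "Sn m F ?Y' n = Suc (Sn m F Y n)" if "Suc f0 \<le> n" for n
    using that
  proof (induction n)
    case 0 then show ?case by simp
  next
    case (Suc n)
    show ?case
    proof (cases "n = f0")
      case True then show ?thesis using base by (simp del: fun_upd_apply)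
    next
      case False
      then have "Suc f0 \<le> n" using Suc.prems by simp
      then show ?thesis using Suc.IH False by (simp add: Sn_Suc rst_def)
    qed
  qed
  then show "numY d m F ?Y' = Suc (numY d m F Y)" unfolding numY_def using assms(2) by simp
qed

lemma M3:
  assumes "validY d m F Y" "validY d m F Y'" "numY d m F Y = numY d m F Y'"
  shows "Y = Y'"
proof -
  have "\<forall>f<n. Y f = Y' f" if "n \<le> d" "Sn m F Y n = Sn m F Y' n" for n
    using that
  proof (induction n)
    case 0 then show ?case by simp
  next
    case (Suc n)
    have l1: "Sn m F Y n < Wt m F n" "Sn m F Y' n < Wt m F n" using M4 assms(1,2) Suc.prems by auto
    have e: "Sn m F Y n + Y n * Wt m F n = Sn m F Y' n + Y' n * Wt m F n" using Suc.prems by (simp add: Sn_Suc)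
    have "(Sn m F Y n + Y n * Wt m F n) div Wt m F n = Y n"
      using l1 Wt_pos[of m F n] by simp
    moreover have "(Sn m F Y' n + Y' n * Wt m F n) div Wt m F n = Y' n"
      using l1 Wt_pos[of m F n] by simp
    ultimately have yn: "Y n = Y' n" using e by simp
    then have "Sn m F Y n = Sn m F Y' n" using e by simp
    then have "\<forall>f<n. Y f = Y' f" using Suc by auto
    then show ?case using yn less_Suc_eq by auto
  qed
  then have "\<forall>f<d. Y f = Y' f" using assms(3) unfolding numY_def by blast
  moreover have "\<forall>f. f \<ge> d \<longrightarrow> Y f = Y' f" using assms(1,2) unfolding validY_def by auto
  ultimately show ?thesis by (metis not_less ext)
qed

lemma Wt_card: "Wt m F d = Suc m ^ card {f. f < d \<and> f \<notin> F}"
proof (induction d)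
  case 0 then show ?case by (simp add: Wt_def)
next
  case (Suc d)
  show ?case
  proof (cases "d \<in> F")
    case True
    then have "{f. f < Suc d \<and> f \<notin> F} = {f. f < d \<and> f \<notin> F}" by (auto simp: less_Suc_eq)
    then show ?thesis using Suc True by (simp add: Wt_Suc)
  next
    case False
    then have e: "{f. f < Suc d \<and> f \<notin> F} = insert d {f. f < d \<and> f \<notin> F}" by (auto simp: less_Suc_eq)
    have "card (insert d {f. f < d \<and> f \<notin> F}) = Suc (card {f. f < d \<and> f \<notin> F})" by simp
    then show ?thesis using Suc False e by (simp add: Wt_Suc)
  qed
qed


lemma MI_upd:
  assumes "MI d E F g s Y" "frame s s' (insert (YB d (length E) + f) A) B" "A \<subseteq> {1,8,9,10,11,12,13,14,15}"
    "B \<subseteq> {1,2,3,4,5,6,7,8,9,13,14}" "f < d" "ireg s' (YB d (length E) + f) = int v"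
  shows "MI d E F g s' (Y(f := v))"
proof -
  let ?a = "YB d (length E) + f"
  have i: "ireg s' a = ireg s a" if "a \<notin> {1,8,9,10,11,12,13,14,15}" "a \<noteq> ?a" for a
    using assms(2,3) that unfolding frame_def by blast
  have r: "rreg s' a = rreg s a" if "a \<notin> {1,2,3,4,5,6,7,8,9,13,14}" for a
    using assms(2,4) that unfolding frame_def by blast
  have y: "ireg s' (YB d (length E) + f') = int ((Y(f := v)) f')" if "f' < d" for f'
  proof (cases "f' = f")
    case True then show ?thesis using assms(6) by simp
  next
    case False then show ?thesis using i[of "YB d (length E) + f'"] assms(1) that unfolding MI_def by (auto simp: YB_def)
  qed
  show ?thesis using assms(1) y unfolding MI_def
    by (simp add: i r FB_def FLB_def YB_def RB_def)
qed

lemma oloop: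
  assumes "MI d E F g s (rst f Y)" "validY d (length E) F Y" "pc s = 143" "ireg s 8 = int f" "f \<le> d"
    "\<forall>f'<f. f' \<notin> F \<longrightarrow> Y f' = length E"
  shows "ev s ((d - f) * 10 + 2) (\<lambda>s'. (\<exists>Y'. pc s' = 64 \<and> MI d E F g s' Y' \<and> validY d (length E) F Y'
      \<and> numY d (length E) F Y' = Suc (numY d (length E) F Y))
    \<or> (pc s' = 157 \<and> ireg s' 0 = 0 \<and> Suc (numY d (length E) F Y) = Wt (length E) F d))"
  using assms
proof (induction "d - f" arbitrary: s f)
  case 0
  then have fd: "f = d" by simp
  have d: "ireg s 0 = int d" using 0 unfolding MI_def by auto
  have m1: "Suc (Sn (length E) F Y d) = Wt (length E) F d"
    by (rule M1[OF 0(3) order_refl]) (use 0 fd in auto)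
  show ?case
    by (rule ev_mono[OF oexit[OF 0(4,5) d]]) (use m1 fd in \<open>auto simp: numY_def\<close>)
next
  case (Suc n)
  let ?m = "length E"
  have fd: "f < d" using Suc by simp
  have e: "d - f = Suc (d - Suc f)" using fd by simp
  have mi: "ireg s 0 = int d" "ireg s 5 = int (FLB d ?m)" "ireg s (FLB d ?m + f) = (if f \<in> F then 1 else 0)"
    "ireg s 2 = 1" "ireg s 6 = int (YB d ?m)" "ireg s (YB d ?m + f) = int (Y f)" "ireg s 3 = int ?m"
    "ireg s 16 = 0" "FLB d ?m \<ge> 17" "YB d ?m \<ge> 17"
    using Suc.prems(1) fd unfolding MI_def by (auto simp: FLB_def YB_def rst_def)
  show ?case
  proof (cases "f \<in> F")
    case True
    have y0: "Y f = 0" using Suc.prems(2) True unfolding validY_def by blast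
    have rs: "rst (Suc f) Y = rst f Y" using y0 unfolding rst_def by (auto simp: less_Suc_eq)
    note b = oflag[OF Suc.prems(3,4) mi(1) fd mi(2)]
    show ?thesis
    proof (rule ev_seq[OF b])
      show "ireg s (FLB d ?m + f) = 1" using mi(3) True by simp
      show "ireg s 2 = 1" "17 \<le> FLB d ?m" using mi by auto
      fix s1 assume s1: "pc s1 = 143 \<and> ireg s1 8 = int (Suc f) \<and> frame s s1 {8,13,14} {}"
      have fr: "frame s s1 {8,13,14} {}" using s1 by blast
      have mi1: "MI d E F g s1 (rst (Suc f) Y)" using MI_frame[OF Suc.prems(1) fr] rs by auto
      have ih: "ev s1 ((d - Suc f) * 10 + 2) (\<lambda>s'. (\<exists>Y'. pc s' = 64 \<and> MI d E F g s' Y' \<and> validY d ?m F Y'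
          \<and> numY d ?m F Y' = Suc (numY d ?m F Y))
        \<or> (pc s' = 157 \<and> ireg s' 0 = 0 \<and> Suc (numY d ?m F Y) = Wt ?m F d))"
        using Suc.hyps(1)[of "Suc f" s1] Suc.hyps(2) mi1 s1 Suc.prems fd True by (auto simp: less_Suc_eq)
      show "ev s1 ((d - f) * 10 + 2 - 6) (\<lambda>s'. (\<exists>Y'. pc s' = 64 \<and> MI d E F g s' Y' \<and> validY d ?m F Y'
          \<and> numY d ?m F Y' = Suc (numY d ?m F Y))
        \<or> (pc s' = 157 \<and> ireg s' 0 = 0 \<and> Suc (numY d ?m F Y) = Wt ?m F d))"
        by (rule ev_mono[OF ih]) (auto simp: e)
    qed (simp add: e)
  next
    case False
    show ?thesis
    proof (cases "Y f < ?m")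
      case True
      note b = oinc[OF Suc.prems(3,4) mi(1) fd mi(2) _ mi(4) _ mi(5) _ mi(6,7) True]
      show ?thesis
      proof (rule ev_seq[OF b])
        show "ireg s (FLB d ?m + f) = 0" using mi(3) False by simp
        show "17 \<le> FLB d ?m" "17 \<le> YB d ?m" using mi by auto
        fix s1 assume s1: "pc s1 = 64 \<and> ireg s1 (YB d ?m + f) = int (Suc (Y f))
          \<and> frame s s1 {YB d ?m + f, 13, 14} {}"
        have mi1: "MI d E F g s1 ((rst f Y)(f := Suc (Y f)))"
          by (rule MI_upd[OF Suc.prems(1), of s1 f "{13,14}" "{}"]) (use s1 fd in auto)
        have m2: "validY d ?m F ((rst f Y)(f := Suc (Y f)))" "numY d ?m F ((rst f Y)(f := Suc (Y f))) = Suc (numY d ?m F Y)"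
          using M2[OF Suc.prems(2) fd False True Suc.prems(6)] by auto
        show "ev s1 ((d - f) * 10 + 2 - 10) (\<lambda>s'. (\<exists>Y'. pc s' = 64 \<and> MI d E F g s' Y' \<and> validY d ?m F Y'
          \<and> numY d ?m F Y' = Suc (numY d ?m F Y))
          \<or> (pc s' = 157 \<and> ireg s' 0 = 0 \<and> Suc (numY d ?m F Y) = Wt ?m F d))"
          by (rule ev_done) (use mi1 m2 s1 in blast)
      qed (simp add: e)
    next
      case ym: False
      have ymm: "Y f = ?m" using ym Suc.prems(2) False fd unfolding validY_def by force
      have rs: "rst (Suc f) Y = (rst f Y)(f := 0)" unfolding rst_def by (auto simp: less_Suc_eq)
      note b = oreset[OF Suc.prems(3,4) mi(1) fd mi(2) _ mi(4) _ mi(5) _ mi(6,7) _ mi(8)]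
      show ?thesis
      proof (rule ev_seq[OF b])
        show "ireg s (FLB d ?m + f) = 0" using mi(3) False by simp
        show "17 \<le> FLB d ?m" "17 \<le> YB d ?m" "?m \<le> Y f" using mi ym by auto
        fix s1 assume s1: "pc s1 = 143 \<and> ireg s1 8 = int (Suc f) \<and> ireg s1 (YB d ?m + f) = 0
          \<and> frame s s1 {YB d ?m + f, 8, 13, 14} {}"
        have mi1: "MI d E F g s1 (rst (Suc f) Y)"
          unfolding rs by (rule MI_upd[OF Suc.prems(1), of s1 f "{8,13,14}" "{}"]) (use s1 fd in auto)
        have ih: "ev s1 ((d - Suc f) * 10 + 2) (\<lambda>s'. (\<exists>Y'. pc s' = 64 \<and> MI d E F g s' Y' \<and> validY d ?m F Y'
            \<and> numY d ?m F Y' = Suc (numY d ?m F Y))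
          \<or> (pc s' = 157 \<and> ireg s' 0 = 0 \<and> Suc (numY d ?m F Y) = Wt ?m F d))"
          using Suc.hyps(1)[of "Suc f" s1] Suc.hyps(2) mi1 s1 Suc.prems fd ymm by (auto simp: less_Suc_eq)
        show "ev s1 ((d - f) * 10 + 2 - 10) (\<lambda>s'. (\<exists>Y'. pc s' = 64 \<and> MI d E F g s' Y' \<and> validY d ?m F Y'
            \<and> numY d ?m F Y' = Suc (numY d ?m F Y))
          \<or> (pc s' = 157 \<and> ireg s' 0 = 0 \<and> Suc (numY d ?m F Y) = Wt ?m F d))"
          by (rule ev_mono[OF ih]) (auto simp: e)
      qed (simp add: e)
    qed
  qed
qed


definition good :: "nat \<Rightarrow> ensemble \<Rightarrow> nat set \<Rightarrow> real \<Rightarrow> (nat \<Rightarrow> nat) \<Rightarrow> bool" where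
  "good d E F g Y \<longleftrightarrow> goodc g (R1 d E F Y) (R2 d E F Y)"

definition Bi :: "nat \<Rightarrow> nat \<Rightarrow> nat" where
  "Bi d m = d * Bf m + d * 10 + 23"

lemma halted_141: "pc s = 141 \<Longrightarrow> halted prog s" by (simp add: halted_def fetch)
lemma halted_157: "pc s = 157 \<Longrightarrow> halted prog s" by (simp add: halted_def fetch)

lemma eiter:
  assumes "MI d E F g s Y" "validY d (length E) F Y" "pc s = 64"
  shows "ev s (Bi d (length E)) (\<lambda>s'. (good d E F g Y \<and> halted prog s' \<and> ireg s' 0 = 1)
    \<or> (\<not> good d E F g Y \<and> (\<exists>Y'. pc s' = 64 \<and> MI d E F g s' Y' \<and> validY d (length E) F Y'
      \<and> numY d (length E) F Y' = Suc (numY d (length E) F Y)))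
    \<or> (\<not> good d E F g Y \<and> halted prog s' \<and> ireg s' 0 = 0 \<and> Suc (numY d (length E) F Y) = Wt (length E) F d))"
proof -
  let ?m = "length E"
  let ?Q = "\<lambda>s'. (good d E F g Y \<and> halted prog s' \<and> ireg s' 0 = 1)
    \<or> (\<not> good d E F g Y \<and> (\<exists>Y'. pc s' = 64 \<and> MI d E F g s' Y' \<and> validY d (length E) F Y'
      \<and> numY d (length E) F Y' = Suc (numY d (length E) F Y)))
    \<or> (\<not> good d E F g Y \<and> halted prog s' \<and> ireg s' 0 = 0 \<and> Suc (numY d (length E) F Y) = Wt (length E) F d)"
  have vy: "\<forall>f'<d. f' \<notin> F \<longrightarrow> Y f' \<le> ?m" using assms(2) unfolding validY_def by blast
  show ?thesis
  proof (rule ev_seq[OF e0blk[OF assms(3)]])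
    fix s1 assume s1: "pc s1 = 67 \<and> rreg s1 2 = 0 \<and> rreg s1 3 = 0 \<and> ireg s1 8 = 0 \<and> frame s s1 {8} {2,3}"
    have fr1: "frame s s1 {8} {2,3}" using s1 by blast
    have mi1: "MI d E F g s1 Y" using MI_frame[OF assms(1) fr1] by auto
    note b2 = floop[where f=0, OF mi1 _ _ _ vy]
    show "ev s1 (Bi d ?m - 3) ?Q"
    proof (rule ev_seq[OF b2])
      show "pc s1 = 67" "ireg s1 8 = int 0" "0 \<le> d" "rreg s1 2 = (\<Sum>f'<0. MXf E F Y f')" "rreg s1 3 = (\<Sum>f'<0. MNf E F Y f')"
        using s1 by auto
      fix s2 assume s2: "pc s2 = 125 \<and> rreg s2 2 = R1 d E F Y \<and> rreg s2 3 = R2 d E F Y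
        \<and> frame s1 s2 {8,9,10,11,12,13,14,15} {2,3,4,5,6,7,8,9}"
      have fr2: "frame s1 s2 {8,9,10,11,12,13,14,15} {2,3,4,5,6,7,8,9}" using s2 by blast
      have mi2: "MI d E F g s2 Y" using MI_frame[OF mi1 fr2] by auto
      have r2: "rreg s2 0 = g" "rreg s2 10 = 1" "rreg s2 11 = 0" "rreg s2 12 = 2" "ireg s2 0 = int d"
        using mi2 unfolding MI_def by auto
      note b3 = testblk[OF _ _ _ r2]
      show "ev s2 (Bi d ?m - 3 - ((d - 0) * Bf ?m + 1)) ?Q"
      proof (rule ev_seq[OF b3])
        show "pc s2 = 125" "rreg s2 2 = R1 d E F Y" "rreg s2 3 = R2 d E F Y" using s2 by auto
        fix s3 assume s3: "pc s3 = (if goodc g (R1 d E F Y) (R2 d E F Y) then 141 else 142)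
          \<and> (goodc g (R1 d E F Y) (R2 d E F Y) \<longrightarrow> ireg s3 0 = 1)
          \<and> (\<not> goodc g (R1 d E F Y) (R2 d E F Y) \<longrightarrow> frame s2 s3 {} {9,13,14})"
        show "ev s3 (Bi d ?m - 3 - ((d - 0) * Bf ?m + 1) - 16) ?Q"
        proof (cases "good d E F g Y")
          case True
          then show ?thesis using s3 halted_141 unfolding good_def by (intro ev_done) auto
        next
          case False
          have fr3: "frame s2 s3 {} {9,13,14}" "pc s3 = 142" using s3 False unfolding good_def by auto
          have mi3: "MI d E F g s3 Y" using MI_frame[OF mi2 fr3(1)] by auto
          show ?thesis
          proof (rule ev_seq[OF odom0[OF fr3(2)]])
            fix s4 assume s4: "pc s4 = 143 \<and> ireg s4 8 = 0 \<and> frame s3 s4 {8} {}"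
            have mi4: "MI d E F g s4 (rst 0 Y)" using MI_frame[OF mi3] s4 by (auto simp: rst_def)
            note b5 = oloop[where f=0, OF mi4 assms(2)]
            show "ev s4 (Bi d ?m - 3 - ((d - 0) * Bf ?m + 1) - 16 - 1) ?Q"
              apply (rule ev_mono[OF b5])
              using s4 apply simp_all
              using False halted_157 apply (auto simp: Bi_def)
              done
          qed (simp add: Bi_def)
        qed
      qed (simp add: Bi_def)
    qed (simp add: Bi_def)
  qed (simp add: Bi_def)
qed

lemma eloop:
  assumes "MI d E F g s Y" "validY d (length E) F Y" "pc s = 64"
    "\<forall>Y'. validY d (length E) F Y' \<and> numY d (length E) F Y' < numY d (length E) F Y \<longrightarrow> \<not> good d E F g Y'"
  shows "ev s ((Wt (length E) F d - numY d (length E) F Y) * Bi d (length E)) (\<lambda>s'. halted prog s'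
     \<and> ireg s' 0 = (if \<exists>Y'. validY d (length E) F Y' \<and> good d E F g Y' then 1 else 0))"
  using assms
proof (induction "Wt (length E) F d - numY d (length E) F Y" arbitrary: s Y rule: less_induct)
  case less
  let ?m = "length E"
  let ?W = "Wt ?m F d"
  have lt: "numY d ?m F Y < ?W" using numY_lt[OF less.prems(2)] .
  show ?case
  proof (rule ev_seq[OF eiter[OF less.prems(1-3)]])
    fix s1 assume s1: "(good d E F g Y \<and> halted prog s1 \<and> ireg s1 0 = 1)
    \<or> (\<not> good d E F g Y \<and> (\<exists>Y'. pc s1 = 64 \<and> MI d E F g s1 Y' \<and> validY d (length E) F Y'
      \<and> numY d (length E) F Y' = Suc (numY d (length E) F Y)))
    \<or> (\<not> good d E F g Y \<and> halted prog s1 \<and> ireg s1 0 = 0 \<and> Suc (numY d (length E) F Y) = Wt (length E) F d)"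
    let ?R = "\<lambda>s'. halted prog s' \<and> ireg s' 0 = (if \<exists>Y'. validY d (length E) F Y' \<and> good d E F g Y' then 1 else 0)"
    let ?t = "(?W - numY d ?m F Y) * Bi d ?m - Bi d ?m"
    have le_eq: "Y' = Y" if "validY d ?m F Y'" "numY d ?m F Y' = numY d ?m F Y" for Y'
      using M3[OF that(1) less.prems(2) that(2)] .
    consider (g) "good d E F g Y \<and> halted prog s1 \<and> ireg s1 0 = 1"
      | (n) Y' where "\<not> good d E F g Y" "pc s1 = 64" "MI d E F g s1 Y'" "validY d (length E) F Y'"
           "numY d (length E) F Y' = Suc (numY d (length E) F Y)"
      | (f) "\<not> good d E F g Y \<and> halted prog s1 \<and> ireg s1 0 = 0 \<and> Suc (numY d (length E) F Y) = Wt (length E) F d"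
      using s1 by (elim disjE exE conjE) auto
    then show "ev s1 ?t ?R"
    proof cases
      case g
      have ex: "\<exists>Y'. validY d ?m F Y' \<and> good d E F g Y'" using g less.prems(2) by blast
      show ?thesis by (rule ev_done) (use g ex in simp)
    next
      case f
      have "\<not> (\<exists>Y'. validY d ?m F Y' \<and> good d E F g Y')"
      proof
        assume "\<exists>Y'. validY d ?m F Y' \<and> good d E F g Y'"
        then obtain Y' where y': "validY d ?m F Y'" "good d E F g Y'" by blast
        have "numY d ?m F Y' < Suc (numY d ?m F Y)" using numY_lt[OF y'(1)] f by simp
        then consider "numY d ?m F Y' < numY d ?m F Y" | "numY d ?m F Y' = numY d ?m F Y" by linarith
        then show False
        proof cases
          case 1 then show False using less.prems(4) y' by blast
        next
          case 2 then show False using le_eq[OF y'(1)] y' f by simp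
        qed
      qed
      then show ?thesis by (intro ev_done) (use f in simp)
    next
      case n
      have inv: "\<forall>Y''. validY d ?m F Y'' \<and> numY d ?m F Y'' < numY d ?m F Y' \<longrightarrow> \<not> good d E F g Y''"
      proof (intro allI impI)
        fix Y'' assume a: "validY d ?m F Y'' \<and> numY d ?m F Y'' < numY d ?m F Y'"
        then consider "numY d ?m F Y'' < numY d ?m F Y" | "numY d ?m F Y'' = numY d ?m F Y" using n by linarith
        then show "\<not> good d E F g Y''"
        proof cases
          case 1 then show ?thesis using less.prems(4) a by blast
        next
          case 2 then show ?thesis using le_eq a n by blast
        qed
      qed
      have dec: "?W - numY d ?m F Y' < ?W - numY d ?m F Y" using n lt numY_lt[OF n(4)] by simp
      have ih: "ev s1 ((?W - numY d ?m F Y') * Bi d ?m) ?R"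
        using less.hyps[OF dec n(3) n(4) n(2) inv] .
      have "(?W - numY d ?m F Y') * Bi d ?m \<le> ?t"
      proof -
        have "?W - numY d ?m F Y' = ?W - numY d ?m F Y - 1" using n by simp
        then show ?thesis by (simp add: diff_mult_distrib)
      qed
      then show ?thesis by (rule ev_mono[OF ih]) auto
    qed
  next
    show "Bi d ?m + ((?W - numY d ?m F Y) * Bi d ?m - Bi d ?m) \<le> (?W - numY d ?m F Y) * Bi d ?m"
    proof -
      have "?W - numY d ?m F Y \<ge> 1" using lt by simp
      then have "Bi d ?m \<le> (?W - numY d ?m F Y) * Bi d ?m" by simp
      then show ?thesis by simp
    qed
  qed
qed


lemma stump_form:
  assumes "stump_ensemble d E" "j < length E"
  shows "E ! j = Node (fe E j) (th E j) (Leaf (yv E j)) (Leaf (nv E j)) \<and> fe E j < d"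
proof -
  have T: "depth (E!j) = 1" "features (E!j) \<subseteq> {..<d}" using assms unfolding stump_ensemble_def by auto
  obtain f \<tau> l r where n: "E!j = Node f \<tau> l r" using T(1) by (cases "E!j") auto
  have "depth l = 0" "depth r = 0" using T(1) n by auto
  then obtain a b where "l = Leaf a" "r = Leaf b" by (cases l; cases r) auto
  then show ?thesis using n T(2) by (simp add: fe_def th_def yv_def nv_def)
qed

lemma raw_nth: "raw E x = (\<Sum>j<length E. tree_eval (E!j) x)"
  unfolding raw_def by (simp add: sum_list_sum_nth atLeast0LessThan)

lemma raw_sumf:
  assumes "stump_ensemble d E" "\<forall>j<length E. tree_eval (E!j) x = hv E j (Z (fe E j))"
  shows "raw E x = (\<Sum>f<d. valf E f (Z f))"
proof -
  have "raw E x = (\<Sum>j<length E. hv E j (Z (fe E j)))" using assms(2) raw_nth by simp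
  also have "\<dots> = (\<Sum>j<length E. \<Sum>f<d. if fe E j = f then hv E j (Z f) else 0)"
  proof (rule sum.cong[OF refl])
    fix j assume "j \<in> {..<length E}"
    then have "fe E j < d" using stump_form[OF assms(1)] by auto
    then show "hv E j (Z (fe E j)) = (\<Sum>f<d. if fe E j = f then hv E j (Z f) else 0)"
      by (simp add: sum.delta)
  qed
  also have "\<dots> = (\<Sum>f<d. \<Sum>j<length E. if fe E j = f then hv E j (Z f) else 0)"
    by (rule sum.swap)
  also have "\<dots> = (\<Sum>f<d. valf E f (Z f))"
    unfolding valf_def ctb_def by simp
  finally show ?thesis .
qed

lemma cand:
  "\<exists>c\<le>length E. \<forall>j<length E. (if t < th E j then yv E j else nv E j) = hv E j c"
proof (cases "\<forall>j<length E. t < th E j")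
  case True
  then show ?thesis by (intro exI[of _ "length E"]) (simp add: hv_def)
next
  case False
  let ?S = "{j. j < length E \<and> th E j \<le> t}"
  have ne: "?S \<noteq> {}" using False by auto
  have fin: "finite ?S" by simp
  have "Max (th E ` ?S) \<in> th E ` ?S" using ne fin by (intro Max_in) auto
  then obtain c where c: "c \<in> ?S" "th E c = Max (th E ` ?S)" by auto
  have mx: "th E j \<le> th E c" if "j \<in> ?S" for j
    using c(2) that fin by (simp add: Max_ge)
  show ?thesis
  proof (intro exI[of _ c] conjI allI impI)
    show "c \<le> length E" using c by simp
    fix j assume j: "j < length E"
    show "(if t < th E j then yv E j else nv E j) = hv E j c"
    proof (cases "t < th E j")
      case True
      then have "th E c < th E j" using c by auto
      then show ?thesis using True c by (simp add: hv_def)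
    next
      case False
      then have "th E j \<le> th E c" using mx j by auto
      then show ?thesis using False c by (simp add: hv_def)
    qed
  qed
qed

definition zc :: "ensemble \<Rightarrow> real \<Rightarrow> nat" where
  "zc E t = (SOME c. c \<le> length E \<and> (\<forall>j<length E. (if t < th E j then yv E j else nv E j) = hv E j c))"

lemma zc0: "zc E t \<le> length E \<and> (\<forall>j<length E. (if t < th E j then yv E j else nv E j) = hv E j (zc E t))"
  unfolding zc_def by (rule someI_ex[OF cand])

lemma zc: "zc E t \<le> length E" "\<forall>j<length E. (if t < th E j then yv E j else nv E j) = hv E j (zc E t)"
  using zc0 by blast+

lemma raw_any:
  assumes "stump_ensemble d E"
  shows "raw E x = (\<Sum>f<d. valf E f (zc E (x f)))"
proof (rule raw_sumf[OF assms])
  show "\<forall>j<length E. tree_eval (E ! j) x = hv E j (zc E (x (fe E j)))"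
  proof (intro allI impI)
    fix j assume j: "j < length E"
    have "tree_eval (E ! j) x = (if x (fe E j) < th E j then yv E j else nv E j)"
      using stump_form[OF assms j] by (simp del: tree_eval.simps) simp
    then show "tree_eval (E ! j) x = hv E j (zc E (x (fe E j)))" using zc(2) j by simp
  qed
qed

definition lowE :: "ensemble \<Rightarrow> real" where
  "lowE E = Min (insert 0 (th E ` {..<length E})) - 1"

definition pt :: "ensemble \<Rightarrow> nat \<Rightarrow> real" where
  "pt E c = (if c < length E then th E c else lowE E)"

lemma lowE: "j < length E \<Longrightarrow> lowE E < th E j"
proof -
  assume j: "j < length E"
  have "Min (insert 0 (th E ` {..<length E})) \<le> th E j" using j by (intro Min_le) auto
  then show ?thesis unfolding lowE_def by simp
qed

lemma raw_pt:
  assumes "stump_ensemble d E" "\<forall>f<d. Z f \<le> length E"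
  shows "raw E (\<lambda>f. pt E (Z f)) = (\<Sum>f<d. valf E f (Z f))"
proof (rule raw_sumf[OF assms(1)])
  show "\<forall>j<length E. tree_eval (E ! j) (\<lambda>f. pt E (Z f)) = hv E j (Z (fe E j))"
  proof (intro allI impI)
    fix j assume j: "j < length E"
    have fd: "fe E j < d" using stump_form[OF assms(1) j] by simp
    have "tree_eval (E ! j) (\<lambda>f. pt E (Z f)) = (if pt E (Z (fe E j)) < th E j then yv E j else nv E j)"
      using stump_form[OF assms(1) j] by simp
    also have "\<dots> = hv E j (Z (fe E j))"
    proof (cases "Z (fe E j) < length E")
      case True then show ?thesis by (simp add: pt_def hv_def)
    next
      case False then show ?thesis using lowE[OF j] by (simp add: pt_def hv_def)
    qed
    finally show "tree_eval (E ! j) (\<lambda>f. pt E (Z f)) = hv E j (Z (fe E j))" .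
  qed
qed

lemma sig_mono: "(a::real) \<le> b \<Longrightarrow> 1 / (1 + exp (- a)) \<le> 1 / (1 + exp (- b))"
proof -
  assume "a \<le> b"
  then have "exp (- b) \<le> exp (- a)" by simp
  then show ?thesis by (intro divide_left_mono) (auto simp: add_pos_pos)
qed

theorem char:
  assumes "stump_ensemble d E" "F \<subseteq> {..<d}"
  shows "sensitive d E F g \<longleftrightarrow> (\<exists>Y. validY d (length E) F Y \<and> good d E F g Y)"
proof
  let ?m = "length E"
  assume "sensitive d E F g"
  then obtain x1 x2 where x: "\<forall>f\<in>{..<d} - F. x1 f = x2 f" "prob E x1 \<ge> 1/2 + g" "prob E x2 \<le> 1/2 - g"
    unfolding sensitive_def by blast
  define Y where "Y = (\<lambda>f. if f < d \<and> f \<notin> F then zc E (x1 f) else 0)"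
  have vY: "validY d ?m F Y" unfolding validY_def Y_def using zc(1) by auto
  have I1: "zc E (x1 f) \<in> {loY F Y f..hiY ?m F Y f}" if "f < d" for f
    using zc(1)[of E "x1 f"] that unfolding loY_def hiY_def Y_def by auto
  have I2: "zc E (x2 f) \<in> {loY F Y f..hiY ?m F Y f}" if "f < d" for f
    using zc(1)[of E "x2 f"] that x(1) unfolding loY_def hiY_def Y_def by auto
  have "raw E x1 \<le> R1 d E F Y"
    unfolding raw_any[OF assms(1)] R1_def MXf_def
    by (rule sum_mono) (use I1 in auto)
  then have g1: "1/2 + g \<le> 1 / (1 + exp (- R1 d E F Y))"
    using x(2) sig_mono unfolding prob_def by (meson order_trans)
  have "R2 d E F Y \<le> raw E x2"
    unfolding raw_any[OF assms(1)] R2_def MNf_def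
    by (rule sum_mono) (use I2 in auto)
  then have g2: "1 / (1 + exp (- R2 d E F Y)) \<le> 1/2 - g"
    using x(3) sig_mono unfolding prob_def by (meson order_trans)
  show "\<exists>Y. validY d ?m F Y \<and> good d E F g Y"
    using vY g1 g2 unfolding good_def goodc_def by blast
next
  let ?m = "length E"
  assume "\<exists>Y. validY d ?m F Y \<and> good d E F g Y"
  then obtain Y where vY: "validY d ?m F Y" and gd: "good d E F g Y" by blast
  let ?I = "\<lambda>f. {loY F Y f..hiY ?m F Y f}"
  have ne: "?I f \<noteq> {}" "\<forall>c\<in>?I f. c \<le> ?m" if "f < d" for f
    using vY that unfolding validY_def loY_def hiY_def by auto
  define Z1 where "Z1 = (\<lambda>f. SOME c. c \<in> ?I f \<and> valf E f c = MXf E F Y f)"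
  define Z2 where "Z2 = (\<lambda>f. SOME c. c \<in> ?I f \<and> valf E f c = MNf E F Y f)"
  have z1: "Z1 f \<in> ?I f \<and> valf E f (Z1 f) = MXf E F Y f" if "f < d" for f
  proof -
    have "MXf E F Y f \<in> valf E f ` ?I f" unfolding MXf_def using ne[OF that] by (intro Max_in) auto
    then have "\<exists>c. c \<in> ?I f \<and> valf E f c = MXf E F Y f" by auto
    then show ?thesis unfolding Z1_def by (rule someI_ex)
  qed
  have z2: "Z2 f \<in> ?I f \<and> valf E f (Z2 f) = MNf E F Y f" if "f < d" for f
  proof -
    have "MNf E F Y f \<in> valf E f ` ?I f" unfolding MNf_def using ne[OF that] by (intro Min_in) auto
    then have "\<exists>c. c \<in> ?I f \<and> valf E f c = MNf E F Y f" by auto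
    then show ?thesis unfolding Z2_def by (rule someI_ex)
  qed
  have r1: "raw E (\<lambda>f. pt E (Z1 f)) = R1 d E F Y"
    unfolding R1_def using z1 ne by (subst raw_pt[OF assms(1)]) (auto intro!: sum.cong)
  have r2: "raw E (\<lambda>f. pt E (Z2 f)) = R2 d E F Y"
    unfolding R2_def using z2 ne by (subst raw_pt[OF assms(1)]) (auto intro!: sum.cong)
  have agree: "\<forall>f\<in>{..<d} - F. pt E (Z1 f) = pt E (Z2 f)"
  proof
    fix f assume f: "f \<in> {..<d} - F"
    then have "?I f = {Y f}" unfolding loY_def hiY_def by auto
    then show "pt E (Z1 f) = pt E (Z2 f)" using z1[of f] z2[of f] f by auto
  qed
  show "sensitive d E F g"
    unfolding sensitive_def prob_def
    apply (rule exI[of _ "\<lambda>f. pt E (Z1 f)"], rule exI[of _ "\<lambda>f. pt E (Z2 f)"])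
    using agree r1 r2 gd unfolding good_def goodc_def by auto
qed


lemma fetch1: "prog ! Suc 0 = IAdd 1 0 1" using fetch(2) by simp

lemma boot0:
  assumes "pc s = 0" "ireg s 0 = int d" "ireg s 1 = int m" "1 \<le> d"
  shows "ev s 12 (\<lambda>s'. pc s' = 12 \<and> ireg s' 0 = int d \<and> ireg s' 1 = int (m + 4*d + 18) \<and> ireg s' 3 = 4
    \<and> ireg s' (m + 4*d) = ireg s 2 \<and> ireg s' (m + 4*d + 21) = ireg s 3
    \<and> frame s s' {1,2,3,m + 4*d, m + 4*d + 21} {})"
  using assms
  apply -
  apply (rule ev_step, simp add: fetch One_nat_def[symmetric] del: One_nat_def, simp del: One_nat_def, simp del: One_nat_def, simp del: One_nat_def, simp add: One_nat_def[symmetric] del: One_nat_def split del: if_split, (rule ev_if_pc)?)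
  apply ((rule ev_done', (simp add: One_nat_def[symmetric] del: One_nat_def; fail), (auto simp: frame_def add_ac)[1]) | (rule ev_step, simp add: fetch One_nat_def[symmetric] del: One_nat_def, simp del: One_nat_def, simp del: One_nat_def, simp del: One_nat_def, simp add: One_nat_def[symmetric] del: One_nat_def split del: if_split, (rule ev_if_pc)?))+
  done

lemma cpbody:
  assumes "pc s = 12" "ireg s 3 = int r" "ireg s 0 = int d" "ireg s 1 = int q" "r + 2*d \<le> q" "4 \<le> r"
  shows "ev s 10 (\<lambda>s'. pc s' = 12 \<and> ireg s' 3 = int (Suc r) \<and> ireg s' (q + r) = ireg s r
    \<and> frame s s' {2,3,q+r} {})"
  using assms
  apply -
  apply (rule ev_step, simp add: fetch fetch1, simp, simp, simp, simp split del: if_split, (rule ev_if_pc)?)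
  apply ((rule ev_done', (simp; fail), (auto simp: frame_def add_ac)[1]) | (rule ev_step, simp add: fetch fetch1, simp, simp, simp, simp split del: if_split, (rule ev_if_pc)?))+
  done

lemma cpexit:
  assumes "pc s = 12" "ireg s 3 = int r" "ireg s 0 = int d" "ireg s 1 = int q" "q < r + 2*d"
  shows "ev s 4 (\<lambda>s'. pc s' = 23 \<and> frame s s' {2} {})"
  using assms
  apply -
  apply (rule ev_step, simp add: fetch fetch1, simp, simp, simp, simp split del: if_split, (rule ev_if_pc)?)
  apply ((rule ev_done', (simp; fail), (auto simp: frame_def add_ac)[1]) | (rule ev_step, simp add: fetch fetch1, simp, simp, simp, simp split del: if_split, (rule ev_if_pc)?))+
  done

lemma setupblk:
  assumes "pc s = 23" "ireg s 0 = int d" "ireg s 1 = int (m + 4*d + 18)" "ireg s (m + 4*d) = v" "1 \<le> d"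
  shows "ev s 31 (\<lambda>s'. pc s' = 54 \<and> ireg s' 0 = int d \<and> ireg s' (m + 4*d + 20) = v \<and> ireg s' 2 = 1 \<and> ireg s' 16 = 0
    \<and> ireg s' 3 = int m \<and> ireg s' 4 = int (FB d m) \<and> ireg s' 5 = int (FLB d m) \<and> ireg s' 6 = int (YB d m)
    \<and> ireg s' 7 = int (RB m) \<and> ireg s' 8 = 1 \<and> ireg s' 9 = int (3*m + 16) \<and> ireg s' 10 = int (3*m)
    \<and> frame s s' {2,3,4,5,6,7,8,9,10,16, m + 4*d + 20} {})"
  using assms unfolding FB_def FLB_def YB_def RB_def
  apply -
  apply (rule ev_step, simp add: fetch fetch1, simp, simp, simp, simp split del: if_split, (rule ev_if_pc)?)
  apply ((rule ev_done', (simp; fail), (auto simp: frame_def add_ac)[1]) | (rule ev_step, simp add: fetch fetch1, simp, simp, simp, simp split del: if_split, (rule ev_if_pc)?))+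
  done

lemma rbody:
  assumes "pc s = 54" "ireg s 8 = int a" "ireg s 9 = int T" "ireg s 10 = int L" "a \<le> L" "ireg s 2 = 1" "ireg s 0 = int d"
    "T \<ge> 2"
  shows "ev s 6 (\<lambda>s'. pc s' = 54 \<and> ireg s' 8 = int (Suc a) \<and> rreg s' (a + T) = rreg s a
    \<and> frame s s' {8,11} {1, a + T})"
  using assms
  apply -
  apply (rule ev_step, simp add: fetch fetch1, simp, simp, simp, simp split del: if_split, (rule ev_if_pc)?)
  apply ((rule ev_done', (simp; fail), (auto simp: frame_def add_ac)[1]) | (rule ev_step, simp add: fetch fetch1, simp, simp, simp, simp split del: if_split, (rule ev_if_pc)?))+
  done

lemma rexit:
  assumes "pc s = 54" "ireg s 8 = int a" "ireg s 10 = int L" "L < a" "ireg s 0 = int d"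
  shows "ev s 2 (\<lambda>s'. pc s' = 61 \<and> frame s s' {} {})"
  using assms
  apply -
  apply (rule ev_step, simp add: fetch fetch1, simp, simp, simp, simp split del: if_split, (rule ev_if_pc)?)
  apply ((rule ev_done', (simp; fail), (auto simp: frame_def add_ac)[1]) | (rule ev_step, simp add: fetch fetch1, simp, simp, simp, simp split del: if_split, (rule ev_if_pc)?))+
  done

lemma rcpe:
  assumes "pc s = 61"
  shows "ev s 3 (\<lambda>s'. pc s' = 64 \<and> rreg s' 10 = 1 \<and> rreg s' 11 = 0 \<and> rreg s' 12 = 2 \<and> frame s s' {} {10,11,12})"
  using assms
  apply -
  apply (rule ev_step, simp add: fetch fetch1, simp, simp, simp, simp split del: if_split, (rule ev_if_pc)?)
  apply ((rule ev_done', (simp; fail), (auto simp: frame_def add_ac)[1]) | (rule ev_step, simp add: fetch fetch1, simp, simp, simp, simp split del: if_split, (rule ev_if_pc)?))+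
  done

lemma zcase:
  assumes "pc s = 0" "ireg s 0 = 0" "ireg s 1 = 0" "rreg s 0 = g"
  shows "ev s 8 (\<lambda>s'. pc s' = (if g \<le> 0 then 163 else 161) \<and> ireg s' 0 = (if g \<le> 0 then 1 else 0))"
  using assms
  apply -
  apply (rule ev_step, simp add: fetch One_nat_def[symmetric] del: One_nat_def, simp del: One_nat_def, simp del: One_nat_def, simp del: One_nat_def, simp add: One_nat_def[symmetric] del: One_nat_def split del: if_split, (rule ev_if_pc)?)
  apply ((rule ev_done', (simp add: One_nat_def[symmetric] del: One_nat_def; fail), (auto simp: frame_def add_ac)[1]) | (rule ev_step, simp add: fetch One_nat_def[symmetric] del: One_nat_def, simp del: One_nat_def, simp del: One_nat_def, simp del: One_nat_def, simp add: One_nat_def[symmetric] del: One_nat_def split del: if_split, (rule ev_if_pc)?))+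
  done


lemma cploop:
  assumes "pc s = 12" "ireg s 3 = int r" "ireg s 0 = int d" "ireg s 1 = int q" "4 \<le> r" "r \<le> q + 1 - 2*d" "2*d \<le> q"
  shows "ev s ((q + 1 - 2*d - r) * 10 + 4) (\<lambda>s'. pc s' = 23
    \<and> (\<forall>a. r \<le> a \<and> a + 2*d \<le> q \<longrightarrow> ireg s' (q + a) = ireg s a)
    \<and> (\<forall>a. a \<notin> {2,3} \<and> \<not> (q + r \<le> a \<and> a + 2*d \<le> 2*q) \<longrightarrow> ireg s' a = ireg s a)
    \<and> (\<forall>a. rreg s' a = rreg s a))"
  using assms
proof (induction "q + 1 - 2*d - r" arbitrary: s r)
  case 0
  then have "q < r + 2*d" by simp
  note b = cpexit[OF 0(2-5) this]
  show ?case
    by (rule ev_mono[OF b]) (use 0 in \<open>auto simp: frame_def\<close>)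
next
  case (Suc n)
  have rq: "r + 2*d \<le> q" using Suc by simp
  note b = cpbody[OF Suc.prems(1-4) rq Suc.prems(5)]
  show ?case
  proof (rule ev_seq[OF b])
    fix s1 :: state assume s1: "pc s1 = 12 \<and> ireg s1 3 = int (Suc r) \<and> ireg s1 (q + r) = ireg s r
      \<and> frame s s1 {2,3,q+r} {}"
    have fr: "frame s s1 {2,3,q+r} {}" using s1 by blast
    have r1: "ireg s1 0 = int d" "ireg s1 1 = int q" using fr Suc.prems rq unfolding frame_def by auto
    have ih: "ev s1 ((q + 1 - 2*d - Suc r) * 10 + 4) (\<lambda>s'. pc s' = 23
      \<and> (\<forall>a. Suc r \<le> a \<and> a + 2*d \<le> q \<longrightarrow> ireg s' (q + a) = ireg s1 a)
      \<and> (\<forall>a. a \<notin> {2,3} \<and> \<not> (q + Suc r \<le> a \<and> a + 2*d \<le> 2*q) \<longrightarrow> ireg s' a = ireg s1 a)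
      \<and> (\<forall>a. rreg s' a = rreg s1 a))"
      using Suc.hyps(1)[of "Suc r" s1] Suc.hyps(2) s1 r1 Suc.prems rq by auto
    have e: "q + 1 - 2*d - r = Suc (q + 1 - 2*d - Suc r)" using rq by simp
    show "ev s1 ((q + 1 - 2*d - r) * 10 + 4 - 10) (\<lambda>s'. pc s' = 23
      \<and> (\<forall>a. r \<le> a \<and> a + 2*d \<le> q \<longrightarrow> ireg s' (q + a) = ireg s a)
      \<and> (\<forall>a. a \<notin> {2,3} \<and> \<not> (q + r \<le> a \<and> a + 2*d \<le> 2*q) \<longrightarrow> ireg s' a = ireg s a)
      \<and> (\<forall>a. rreg s' a = rreg s a))"
    proof (rule ev_mono[OF ih])
      show "(q + 1 - 2*d - Suc r) * 10 + 4 \<le> (q + 1 - 2*d - r) * 10 + 4 - 10" unfolding e by simp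
      fix s2 :: state assume s2: "pc s2 = 23
        \<and> (\<forall>a. Suc r \<le> a \<and> a + 2*d \<le> q \<longrightarrow> ireg s2 (q + a) = ireg s1 a)
        \<and> (\<forall>a. a \<notin> {2,3} \<and> \<not> (q + Suc r \<le> a \<and> a + 2*d \<le> 2*q) \<longrightarrow> ireg s2 a = ireg s1 a)
        \<and> (\<forall>a. rreg s2 a = rreg s1 a)"
      have f1: "ireg s1 a = ireg s a" if "a \<notin> {2,3,q+r}" for a using fr that unfolding frame_def by blast
      have f2: "rreg s1 a = rreg s a" for a using fr unfolding frame_def by blast
      have c1: "ireg s2 (q + a) = ireg s a" if "r \<le> a" "a + 2*d \<le> q" for a
      proof (cases "a = r")
        case True
        then show ?thesis using s2 s1 Suc.prems(5) by auto
      next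
        case False
        then have "Suc r \<le> a" using that by simp
        then have "ireg s2 (q + a) = ireg s1 a" using s2 that by blast
        also have "\<dots> = ireg s a" using f1 that False Suc.prems(5) by auto
        finally show ?thesis .
      qed
      have c2: "ireg s2 a = ireg s a" if "a \<notin> {2,3}" "\<not> (q + r \<le> a \<and> a + 2*d \<le> 2*q)" for a
      proof -
        have "ireg s2 a = ireg s1 a" using s2 that by auto
        also have "\<dots> = ireg s a" using f1 that rq by auto
        finally show ?thesis .
      qed
      show "pc s2 = 23
        \<and> (\<forall>a. r \<le> a \<and> a + 2*d \<le> q \<longrightarrow> ireg s2 (q + a) = ireg s a)
        \<and> (\<forall>a. a \<notin> {2,3} \<and> \<not> (q + r \<le> a \<and> a + 2*d \<le> 2*q) \<longrightarrow> ireg s2 a = ireg s a)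
        \<and> (\<forall>a. rreg s2 a = rreg s a)"
        using s2 c1 c2 f2 by auto
    qed
  qed (use rq in simp)
qed

lemma rloop:
  assumes "pc s = 54" "ireg s 8 = int a" "ireg s 9 = int T" "ireg s 10 = int L" "ireg s 2 = 1" "ireg s 0 = int d"
    "1 \<le> a" "a \<le> Suc L" "L < T" "T \<ge> 2"
  shows "ev s ((Suc L - a) * 6 + 2) (\<lambda>s'. pc s' = 61
    \<and> (\<forall>b. a \<le> b \<and> b \<le> L \<longrightarrow> rreg s' (b + T) = rreg s b)
    \<and> (\<forall>b. b \<noteq> 1 \<and> \<not> (a + T \<le> b \<and> b \<le> L + T) \<longrightarrow> rreg s' b = rreg s b)
    \<and> (\<forall>x. x \<notin> {8,11} \<longrightarrow> ireg s' x = ireg s x))"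
  using assms
proof (induction "Suc L - a" arbitrary: s a)
  case 0
  then have "L < a" by simp
  note b = rexit[OF 0(2,3,5) this 0(7)]
  show ?case
    by (rule ev_mono[OF b]) (use 0 in \<open>auto simp: frame_def\<close>)
next
  case (Suc n)
  have aL: "a \<le> L" using Suc by simp
  note b = rbody[OF Suc.prems(1-4) aL Suc.prems(5,6,10)]
  show ?case
  proof (rule ev_seq[OF b])
    fix s1 assume s1: "pc s1 = 54 \<and> ireg s1 8 = int (Suc a) \<and> rreg s1 (a + T) = rreg s a
      \<and> frame s s1 {8,11} {1, a + T}"
    have fr: "frame s s1 {8,11} {1, a + T}" using s1 by blast
    have r1: "ireg s1 9 = int T" "ireg s1 10 = int L" "ireg s1 2 = 1" "ireg s1 0 = int d"
      using fr Suc.prems unfolding frame_def by auto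
    have ih: "ev s1 ((Suc L - Suc a) * 6 + 2) (\<lambda>s'. pc s' = 61
      \<and> (\<forall>b. Suc a \<le> b \<and> b \<le> L \<longrightarrow> rreg s' (b + T) = rreg s1 b)
      \<and> (\<forall>b. b \<noteq> 1 \<and> \<not> (Suc a + T \<le> b \<and> b \<le> L + T) \<longrightarrow> rreg s' b = rreg s1 b)
      \<and> (\<forall>x. x \<notin> {8,11} \<longrightarrow> ireg s' x = ireg s1 x))"
      using Suc.hyps(1)[of "Suc a" s1] Suc.hyps(2) s1 r1 Suc.prems aL by auto
    have e: "Suc L - a = Suc (Suc L - Suc a)" using aL by simp
    show "ev s1 ((Suc L - a) * 6 + 2 - 6) (\<lambda>s'. pc s' = 61
      \<and> (\<forall>b. a \<le> b \<and> b \<le> L \<longrightarrow> rreg s' (b + T) = rreg s b)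
      \<and> (\<forall>b. b \<noteq> 1 \<and> \<not> (a + T \<le> b \<and> b \<le> L + T) \<longrightarrow> rreg s' b = rreg s b)
      \<and> (\<forall>x. x \<notin> {8,11} \<longrightarrow> ireg s' x = ireg s x))"
    proof (rule ev_mono[OF ih])
      show "(Suc L - Suc a) * 6 + 2 \<le> (Suc L - a) * 6 + 2 - 6" unfolding e by simp
      fix s2 assume s2: "pc s2 = 61
        \<and> (\<forall>b. Suc a \<le> b \<and> b \<le> L \<longrightarrow> rreg s2 (b + T) = rreg s1 b)
        \<and> (\<forall>b. b \<noteq> 1 \<and> \<not> (Suc a + T \<le> b \<and> b \<le> L + T) \<longrightarrow> rreg s2 b = rreg s1 b)
        \<and> (\<forall>x. x \<notin> {8,11} \<longrightarrow> ireg s2 x = ireg s1 x)"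
      have f1: "rreg s1 b = rreg s b" if "b \<notin> {1, a + T}" for b using fr that unfolding frame_def by blast
      have f2: "ireg s1 x = ireg s x" if "x \<notin> {8,11}" for x using fr that unfolding frame_def by blast
      have c1: "rreg s2 (b + T) = rreg s b" if "a \<le> b" "b \<le> L" for b
      proof (cases "a = b")
        case True
        then show ?thesis using s2 s1 Suc.prems(10) by auto
      next
        case False
        then have "Suc a \<le> b" using that by simp
        then have "rreg s2 (b + T) = rreg s1 b" using s2 that by blast
        also have "\<dots> = rreg s b" using f1 that False Suc.prems(7,9) by auto
        finally show ?thesis .
      qed
      have c2: "rreg s2 b = rreg s b" if "b \<noteq> 1" "\<not> (a + T \<le> b \<and> b \<le> L + T)" for b
      proof -
        have "rreg s2 b = rreg s1 b" using s2 that by auto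
        also have "\<dots> = rreg s b" using f1 that aL by auto
        finally show ?thesis .
      qed
      show "pc s2 = 61
        \<and> (\<forall>b. a \<le> b \<and> b \<le> L \<longrightarrow> rreg s2 (b + T) = rreg s b)
        \<and> (\<forall>b. b \<noteq> 1 \<and> \<not> (a + T \<le> b \<and> b \<le> L + T) \<longrightarrow> rreg s2 b = rreg s b)
        \<and> (\<forall>x. x \<notin> {8,11} \<longrightarrow> ireg s2 x = ireg s x)"
        using s2 c1 c2 f2 by auto
    qed
  qed (use aL in simp)
qed


lemma enc_basic: "pc (encode d E F g) = 0" "ireg (encode d E F g) 0 = int d" "ireg (encode d E F g) 1 = int (length E)"
  "rreg (encode d E F g) 0 = g"
  by (simp_all add: encode_def Let_def)

lemma enc_feat: "j < length E \<Longrightarrow> ireg (encode d E F g) (2 + j) = int (fe E j)"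
  by (simp add: encode_def Let_def fe_def)

lemma enc_flag: "f < d \<Longrightarrow> ireg (encode d E F g) (2 + length E + f) = (if f \<in> F then 1 else 0)"
  by (simp add: encode_def Let_def)

lemma enc_zero: "2 + length E + d \<le> a \<Longrightarrow> ireg (encode d E F g) a = 0"
  by (simp add: encode_def Let_def)

lemma dm3: "Suc (Suc (3*j)) mod 3 = 2" "Suc (Suc (3*j)) div 3 = j" "Suc (3*j) mod 3 = 1" "Suc (3*j) div 3 = (j::nat)"
proof -
  have e1: "Suc (Suc (3*j)) = 2 + j*(3::nat)" by simp
  have e2: "Suc (3*j) = 1 + j*(3::nat)" by simp
  show "Suc (Suc (3*j)) mod 3 = 2" unfolding e1 mod_mult_self1 by simp
  show "Suc (3*j) mod 3 = 1" unfolding e2 mod_mult_self1 by simp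
  show "Suc (Suc (3*j)) div 3 = j" unfolding e1 by simp
  show "Suc (3*j) div 3 = j" unfolding e2 by simp
qed

lemma enc_real: "j < length E \<Longrightarrow> rreg (encode d E F g) (1 + 3*j) = th E j \<and>
  rreg (encode d E F g) (2 + 3*j) = yv E j \<and> rreg (encode d E F g) (3 + 3*j) = nv E j"
proof -
  assume j: "j < length E"
  show ?thesis using j dm3
    by (simp add: encode_def Let_def th_def yv_def nv_def)
qed

definition Tboot :: "nat \<Rightarrow> nat \<Rightarrow> nat" where
  "Tboot d m = 12 + ((m + 2*d + 15) * 10 + 4) + 31 + (3*m*6 + 2) + 3"

lemma boot:
  assumes "1 \<le> d"
  shows "ev (encode d E F g) (Tboot d (length E)) (\<lambda>s'. pc s' = 64 \<and> MI d E F g s' (\<lambda>_. 0))"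
proof -
  let ?s0 = "encode d E F g"
  let ?m = "length E"
  let ?q = "?m + 4*d + 18"
  note b1 = boot0[OF enc_basic(1,2,3) assms]
  show ?thesis
  proof (rule ev_seq[OF b1])
    fix s1 :: state assume s1: "pc s1 = 12 \<and> ireg s1 0 = int d \<and> ireg s1 1 = int ?q \<and> ireg s1 3 = 4
      \<and> ireg s1 (?m + 4*d) = ireg ?s0 2 \<and> ireg s1 (?m + 4*d + 21) = ireg ?s0 3
      \<and> frame ?s0 s1 {1,2,3,?m + 4*d, ?m + 4*d + 21} {}"
    have fr1: "frame ?s0 s1 {1,2,3,?m + 4*d, ?m + 4*d + 21} {}" using s1 by blast
    note b2 = cploop[where r=4, OF _ _ _ _ order_refl]
    show "ev s1 (Tboot d ?m - 12) (\<lambda>s'. pc s' = 64 \<and> MI d E F g s' (\<lambda>_. 0))"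
    proof (rule ev_seq[OF b2])
      show "pc s1 = 12" "ireg s1 3 = int 4" "ireg s1 0 = int d" "ireg s1 1 = int ?q" using s1 by auto
      show "4 \<le> ?q + 1 - 2 * d" "2 * d \<le> ?q" by simp_all
      fix s2 :: state assume s2: "pc s2 = 23
        \<and> (\<forall>a. 4 \<le> a \<and> a + 2*d \<le> ?q \<longrightarrow> ireg s2 (?q + a) = ireg s1 a)
        \<and> (\<forall>a. a \<notin> {2,3} \<and> \<not> (?q + 4 \<le> a \<and> a + 2*d \<le> 2*?q) \<longrightarrow> ireg s2 a = ireg s1 a)
        \<and> (\<forall>a. rreg s2 a = rreg s1 a)"
      have i21': "ireg s2 x = ireg s1 x" if "x \<notin> {2,3}" "\<not> (?q + 4 \<le> x \<and> x + 2*d \<le> 2*?q)" for x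
        using s2 that by blast
      have s2a0: "ireg s2 0 = ireg s1 0" by (rule i21') auto
      have s2a1: "ireg s2 1 = ireg s1 1" by (rule i21') auto
      have s2a2: "ireg s2 (?m + 4*d) = ireg s1 (?m + 4*d)" by (rule i21') (use assms in auto)
      have s2a: "ireg s2 0 = int d" "ireg s2 1 = int ?q" "ireg s2 (?m + 4*d) = ireg ?s0 2"
        using s2a0 s2a1 s2a2 s1 by auto
      note b3 = setupblk[OF _ s2a assms]
      show "ev s2 (Tboot d ?m - 12 - ((?q + 1 - 2 * d - 4) * 10 + 4)) (\<lambda>s'. pc s' = 64 \<and> MI d E F g s' (\<lambda>_. 0))"
      proof (rule ev_seq[OF b3])
        show "pc s2 = 23" using s2 by blast
        fix s3 :: state assume s3: "pc s3 = 54 \<and> ireg s3 0 = int d \<and> ireg s3 (?m + 4*d + 20) = ireg ?s0 2 \<and> ireg s3 2 = 1 \<and> ireg s3 16 = 0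
          \<and> ireg s3 3 = int ?m \<and> ireg s3 4 = int (FB d ?m) \<and> ireg s3 5 = int (FLB d ?m) \<and> ireg s3 6 = int (YB d ?m)
          \<and> ireg s3 7 = int (RB ?m) \<and> ireg s3 8 = 1 \<and> ireg s3 9 = int (3*?m + 16) \<and> ireg s3 10 = int (3*?m)
          \<and> frame s2 s3 {2,3,4,5,6,7,8,9,10,16, ?m + 4*d + 20} {}"
        have fr3: "frame s2 s3 {2,3,4,5,6,7,8,9,10,16, ?m + 4*d + 20} {}" using s3 by blast
        note b4 = rloop[where a=1 and T="3*?m+16" and L="3*?m", OF _ _ _ _ _ _ order_refl]
        show "ev s3 (Tboot d ?m - 12 - ((?q + 1 - 2 * d - 4) * 10 + 4) - 31) (\<lambda>s'. pc s' = 64 \<and> MI d E F g s' (\<lambda>_. 0))"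
        proof (rule ev_seq[OF b4])
          show "pc s3 = 54" "ireg s3 8 = int 1" "ireg s3 9 = int (3*?m + 16)" "ireg s3 10 = int (3*?m)"
            "ireg s3 2 = 1" "ireg s3 0 = int d" using s3 by auto
          show "1 \<le> Suc (3 * ?m)" "3 * ?m < 3 * ?m + 16" "2 \<le> 3 * ?m + 16" by simp_all
          fix s4 :: state assume s4: "pc s4 = 61
            \<and> (\<forall>b. 1 \<le> b \<and> b \<le> 3*?m \<longrightarrow> rreg s4 (b + (3*?m+16)) = rreg s3 b)
            \<and> (\<forall>b. b \<noteq> 1 \<and> \<not> (1 + (3*?m+16) \<le> b \<and> b \<le> 3*?m + (3*?m+16)) \<longrightarrow> rreg s4 b = rreg s3 b)
            \<and> (\<forall>x. x \<notin> {8,11} \<longrightarrow> ireg s4 x = ireg s3 x)"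
          note b5 = rcpe[of s4]
          show "ev s4 (Tboot d ?m - 12 - ((?q + 1 - 2 * d - 4) * 10 + 4) - 31 - ((Suc (3 * ?m) - 1) * 6 + 2))
             (\<lambda>s'. pc s' = 64 \<and> MI d E F g s' (\<lambda>_. 0))"
          proof (rule ev_mono[OF b5])
            show "pc s4 = 61" using s4 by blast
            show "3 \<le> Tboot d ?m - 12 - ((?q + 1 - 2 * d - 4) * 10 + 4) - 31 - ((Suc (3 * ?m) - 1) * 6 + 2)"
              unfolding Tboot_def by simp
            fix s5 :: state assume s5: "pc s5 = 64 \<and> rreg s5 10 = 1 \<and> rreg s5 11 = 0 \<and> rreg s5 12 = 2 \<and> frame s4 s5 {} {10,11,12}"
            have i54: "ireg s5 x = ireg s3 x" if "x \<notin> {8,11}" for x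
              using s5 s4 that unfolding frame_def by auto
            have i32: "ireg s3 x = ireg s2 x" if "x \<notin> {2,3,4,5,6,7,8,9,10,16, ?m + 4*d + 20}" for x
              using fr3 that unfolding frame_def by blast
            have i21: "ireg s2 x = ireg s1 x" if "x \<notin> {2,3}" "\<not> (?q + 4 \<le> x \<and> x + 2*d \<le> 2*?q)" for x
              using s2 that by blast
            have i10: "ireg s1 x = ireg ?s0 x" if "x \<notin> {1,2,3,?m + 4*d, ?m + 4*d + 21}" for x
              using fr1 that unfolding frame_def by blast
            have reloc: "ireg s5 (?q + a) = ireg ?s0 a" if "2 \<le> a" "a \<le> ?m + d + 1" for a
            proof -
              have "ireg s5 (?q + a) = ireg s3 (?q + a)" by (rule i54) simp
              also have "\<dots> = ireg ?s0 a"
              proof (cases "a = 2")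
                case True then show ?thesis using s3 by (simp add: add_ac)
              next
                case a2: False
                have "ireg s3 (?q + a) = ireg s2 (?q + a)" by (rule i32) (use a2 in auto)
                also have "\<dots> = ireg ?s0 a"
                proof (cases "a = 3")
                  case True
                  have "ireg s2 (?q + a) = ireg s1 (?q + a)" by (rule i21) (use True in auto)
                  then show ?thesis using s1 True by (simp add: add_ac)
                next
                  case False
                  then have "4 \<le> a" using a2 that by simp
                  then have "ireg s2 (?q + a) = ireg s1 a" using s2 that by auto
                  also have "\<dots> = ireg ?s0 a" by (rule i10) (use that \<open>4 \<le> a\<close> assms in auto)
                  finally show ?thesis .
                qed
                finally show ?thesis .
              qed
              finally show ?thesis .
            qed
            have yz: "ireg s5 (YB d ?m + f) = 0" if "f < d" for f
            proof -
              have "ireg s5 (YB d ?m + f) = ireg s3 (YB d ?m + f)" by (rule i54) (auto simp: YB_def)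
              also have "\<dots> = ireg s2 (YB d ?m + f)" by (rule i32) (auto simp: YB_def)
              also have "\<dots> = ireg s1 (YB d ?m + f)" by (rule i21) (auto simp: YB_def)
              also have "\<dots> = ireg ?s0 (YB d ?m + f)" by (rule i10) (auto simp: YB_def)
              also have "\<dots> = 0" by (rule enc_zero) (auto simp: YB_def)
              finally show ?thesis .
            qed
            have r5: "rreg s5 x = rreg s4 x" if "x \<notin> {10,11,12}" for x
              using s5 that unfolding frame_def by auto
            have r30: "rreg s3 x = rreg ?s0 x" for x
              using fr3 s2 fr1 unfolding frame_def by auto
            have rr: "rreg s5 (RB ?m + b - 1) = rreg ?s0 b" if "1 \<le> b" "b \<le> 3*?m" for b
            proof -
              have "rreg s5 (RB ?m + b - 1) = rreg s4 (b + (3*?m+16))" using r5[of "RB ?m + b - 1"] that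
                by (auto simp: RB_def add_ac)
              also have "\<dots> = rreg s3 b" using s4 that by blast
              finally show ?thesis using r30 by simp
            qed
            have reals: "rreg s5 (RB ?m + 3*j) = th E j \<and> rreg s5 (RB ?m + 3*j + 1) = yv E j
                \<and> rreg s5 (RB ?m + 3*j + 2) = nv E j" if "j < ?m" for j
              using rr[of "1 + 3*j"] rr[of "2 + 3*j"] rr[of "3 + 3*j"] enc_real[OF that, of d F g] that
              by (simp add: add_ac)
            have g0: "rreg s5 0 = g"
              using r5[of 0] s4 r30[of 0] enc_basic(4) by auto
            have regs: "ireg s5 0 = int d" "ireg s5 2 = 1" "ireg s5 3 = int ?m" "ireg s5 4 = int (FB d ?m)"
              "ireg s5 5 = int (FLB d ?m)" "ireg s5 6 = int (YB d ?m)" "ireg s5 7 = int (RB ?m)" "ireg s5 16 = 0"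
              using i54 s3 by auto
            have feat: "ireg s5 (FB d ?m + j) = int (fe E j)" if "j < ?m" for j
              using reloc[of "2 + j"] enc_feat[OF that] that by (simp add: FB_def add_ac)
            have flag: "ireg s5 (FLB d ?m + f) = (if f \<in> F then 1 else 0)" if "f < d" for f
              using reloc[of "2 + ?m + f"] enc_flag[OF that] that by (simp add: FLB_def add_ac)
            show "pc s5 = 64 \<and> MI d E F g s5 (\<lambda>_. 0)"
              unfolding MI_def using s5 regs feat flag yz reals g0 by auto
          qed
        qed (simp add: Tboot_def)
      qed (simp add: Tboot_def)
    qed (simp add: Tboot_def)
  qed (simp add: Tboot_def)
qed


lemma dec_of_ev:
  assumes "ev s t (\<lambda>s'. halted prog s' \<and> ireg s' 0 = (if b then 1 else 0))"
  shows "decides_within prog s t b"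
  using assms unfolding ev_def decides_within_def by blast

lemma d0_empty: "stump_ensemble 0 E \<Longrightarrow> E = []"
proof (rule ccontr)
  assume a: "stump_ensemble 0 E" "E \<noteq> []"
  then have "0 < length E" by simp
  from stump_form[OF a(1) this] show False by simp
qed

lemma sens_d0:
  assumes "F \<subseteq> {..<0}"
  shows "sensitive 0 [] F g \<longleftrightarrow> g \<le> 0"
proof -
  have st: "stump_ensemble 0 []" by (simp add: stump_ensemble_def)
  have v: "validY 0 0 F Y \<longleftrightarrow> Y = (\<lambda>_. 0)" for Y unfolding validY_def by auto
  have gd: "good 0 [] F g Y \<longleftrightarrow> g \<le> 0" for Y
    unfolding good_def goodc_def R1_def R2_def by auto
  show ?thesis using char[OF st assms] v gd by auto
qed

lemma time_bound:
  assumes "card ({..<d} - F) \<le> k"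
  shows "Tboot d m + Wt m F d * Bi d m \<le> 300 * (d + m + 1) ^ (k + 3)"
proof -
  let ?N = "d + m + 1"
  have N1: "1 \<le> ?N" by simp
  have "{f. f < d \<and> f \<notin> F} = {..<d} - F" by auto
  then have wt0: "Wt m F d = Suc m ^ card ({..<d} - F)" using Wt_card by simp
  have "Suc m ^ card ({..<d} - F) \<le> ?N ^ card ({..<d} - F)" by (rule power_mono) auto
  also have "\<dots> \<le> ?N ^ k" by (rule power_increasing[OF assms N1])
  finally have wt: "Wt m F d \<le> ?N ^ k" using wt0 by simp
  have kc: "Kc m \<le> 20 * ?N" unfolding Kc_def by simp
  have n2: "1 \<le> ?N ^ 2" using N1 by simp
  have "Suc m * Kc m \<le> ?N * (20 * ?N)" by (rule mult_le_mono) (use kc in auto)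
  also have "\<dots> = 20 * ?N ^ 2" by (simp only: power2_eq_square mult.assoc mult.left_commute)
  finally have bf: "Bf m \<le> 35 * ?N ^ 2" unfolding Bf_def using n2 by linarith
  have n3: "1 \<le> ?N ^ 3" "?N \<le> ?N ^ 3" using N1 by (simp_all add: self_le_power)
  have "d * Bf m \<le> ?N * (35 * ?N ^ 2)" by (rule mult_le_mono) (use bf in auto)
  also have "\<dots> = 35 * ?N ^ 3" by (simp only: power2_eq_square power3_eq_cube mult.assoc mult.left_commute)
  finally have "d * Bf m \<le> 35 * ?N ^ 3" .
  moreover have "d * 10 \<le> 10 * ?N ^ 3" using n3 by linarith
  ultimately have bi: "Bi d m \<le> 68 * ?N ^ 3" unfolding Bi_def using n3 by linarith
  have "Wt m F d * Bi d m \<le> ?N ^ k * (68 * ?N ^ 3)" by (rule mult_le_mono[OF wt bi])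
  also have "\<dots> = 68 * ?N ^ (k + 3)" by (simp add: power_add)
  finally have a: "Wt m F d * Bi d m \<le> 68 * ?N ^ (k + 3)" .
  have "?N \<le> ?N ^ (k + 3)" using N1 by (simp add: self_le_power)
  then have c: "202 * ?N \<le> 202 * ?N ^ (k + 3)" by (rule mult_le_mono2)
  have "Tboot d m \<le> 202 * ?N" unfolding Tboot_def by simp
  then have b: "Tboot d m \<le> 202 * ?N ^ (k + 3)" using c by (rule order_trans)
  show ?thesis using a b by linarith
qed

theorem theorem2:
  fixes k :: nat
  shows "\<exists>(P :: program) (c :: nat) (e :: nat).
           \<forall>(d :: nat) (E :: ensemble) (F :: nat set) (g :: real).
             stump_ensemble d E \<and> F \<subseteq> {..<d} \<and> card ({..<d} - F) \<le> k \<and> g \<ge> 0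
             \<longrightarrow> decides_within P (encode d E F g) (c * (d + length E + 1) ^ e)
                   (sensitive d E F g)"
proof (intro exI allI impI)
  fix d :: nat and E :: ensemble and F :: "nat set" and g :: real
  assume a: "stump_ensemble d E \<and> F \<subseteq> {..<d} \<and> card ({..<d} - F) \<le> k \<and> g \<ge> 0"
  let ?m = "length E"
  let ?t = "300 * (d + length E + 1) ^ (k + 3)"
  show "decides_within prog (encode d E F g) ?t (sensitive d E F g)"
  proof (cases "d = 0")
    case True
    then have e: "E = []" using d0_empty a by simp
    have z: "ev (encode d E F g) 8 (\<lambda>s'. pc s' = (if g \<le> 0 then 163 else 161) \<and> ireg s' 0 = (if g \<le> 0 then 1 else 0))"
      by (rule zcase) (use enc_basic[of d E F g] True e in simp_all)
    have s: "sensitive d E F g \<longleftrightarrow> g \<le> 0" using sens_d0 a True e by simp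
    have "ev (encode d E F g) ?t (\<lambda>s'. halted prog s' \<and> ireg s' 0 = (if sensitive d E F g then 1 else 0))"
    proof (rule ev_mono[OF z])
      have "1 \<le> (d + length E + 1) ^ (k + 3)" by simp
      then show "8 \<le> ?t" by linarith
      fix s' :: state assume "pc s' = (if g \<le> 0 then 163 else 161) \<and> ireg s' 0 = (if g \<le> 0 then 1 else 0)"
      then show "halted prog s' \<and> ireg s' 0 = (if sensitive d E F g then 1 else 0)"
        using s by (auto simp: halted_def fetch)
    qed
    then show ?thesis by (rule dec_of_ev)
  next
    case False
    then have d1: "1 \<le> d" by simp
    note b = boot[OF d1, of E F g]
    have "ev (encode d E F g) (Tboot d ?m + Wt ?m F d * Bi d ?m)
       (\<lambda>s'. halted prog s' \<and> ireg s' 0 = (if sensitive d E F g then 1 else 0))"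
    proof (rule ev_seq[OF b])
      fix s1 :: state assume s1: "pc s1 = 64 \<and> MI d E F g s1 (\<lambda>_. 0)"
      have v0: "validY d ?m F (\<lambda>_. 0)" unfolding validY_def by simp
      have n0: "numY d ?m F (\<lambda>_. 0) = 0" unfolding numY_def Sn_def by simp
      have el: "ev s1 ((Wt ?m F d - numY d ?m F (\<lambda>_. 0)) * Bi d ?m) (\<lambda>s'. halted prog s'
        \<and> ireg s' 0 = (if \<exists>Y'. validY d ?m F Y' \<and> good d E F g Y' then 1 else 0))"
        by (rule eloop) (use s1 v0 n0 in auto)
      have ch: "(\<exists>Y'. validY d ?m F Y' \<and> good d E F g Y') = sensitive d E F g"
        using char a by blast
      show "ev s1 (Wt ?m F d * Bi d ?m) (\<lambda>s'. halted prog s' \<and> ireg s' 0 = (if sensitive d E F g then 1 else 0))"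
        using el n0 ch by simp
    qed simp
    then have "ev (encode d E F g) ?t (\<lambda>s'. halted prog s' \<and> ireg s' 0 = (if sensitive d E F g then 1 else 0))"
      by (rule ev_mono) (use time_bound a in auto)
    then show ?thesis by (rule dec_of_ev)
  qed
qed


end
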